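(* Let $n\ge2$, let $A,B$ be $n\times n$ positive definite matrices, $q\in\mathbb{C}$ with $0<|q|\le1$, and $f\in\mathcal{F}$. Then (a) $|q|^2f(w_q(A))\le|q|\,w_q(f(A))\le f(w_q(A))$; (b) for every $\gamma\in(0,1)$, $|q|\,w_q\big((1-\gamma)f(A)+\gamma f(B)\big)\le f\big((1-\gamma)w_q(A)+\gamma w_q(B)\big)$; (c) for every $t\in(0,1)$, $|q|\,w_q((A+B)^t)\le w_q(A^t+B^t)$.
   Context: $\mathcal{F}$ is the set of operator monotone functions $f:(0,\infty)\to(0,\infty)$ with $f(1)=1$; $f(A)$ is defined by functional calculus. $w_q(A)=\sup\{|\langle Ax,y\rangle|:\|x\|=\|y\|=1,\ \langle x,y\rangle=q\}$. *)

theory Defs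
  imports "Jordan_Normal_Form.Schur_Decomposition"
begin

text \<open>Complex n x n matrices are represented as JNF matrices with explicit dimension n.
  Inner product: x \<bullet>c y = sum_i x_i * cnj (y_i) (linear in the first argument).\<close>

definition vnorm :: "complex vec \<Rightarrow> real" where
  "vnorm x = sqrt (Re (x \<bullet>c x))"

definition hermitian_mat :: "nat \<Rightarrow> complex mat \<Rightarrow> bool" where
  "hermitian_mat n A \<longleftrightarrow> A \<in> carrier_mat n n \<and> mat_adjoint A = A"

definition posdef_mat :: "nat \<Rightarrow> complex mat \<Rightarrow> bool" where
  "posdef_mat n A \<longleftrightarrow> hermitian_mat n A \<and>
     (\<forall>x \<in> carrier_vec n. x \<noteq> 0\<^sub>v n \<longrightarrow> Re ((A *\<^sub>v x) \<bullet>c x) > 0)"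

definition possemidef_mat :: "nat \<Rightarrow> complex mat \<Rightarrow> bool" where
  "possemidef_mat n A \<longleftrightarrow> hermitian_mat n A \<and>
     (\<forall>x \<in> carrier_vec n. Re ((A *\<^sub>v x) \<bullet>c x) \<ge> 0)"

definition loewner_le :: "nat \<Rightarrow> complex mat \<Rightarrow> complex mat \<Rightarrow> bool" where
  "loewner_le n A B \<longleftrightarrow> hermitian_mat n A \<and> hermitian_mat n B \<and> possemidef_mat n (B - A)"

definition unitary_mat :: "nat \<Rightarrow> complex mat \<Rightarrow> bool" where
  "unitary_mat n U \<longleftrightarrow> U \<in> carrier_mat n n \<and> U * mat_adjoint U = 1\<^sub>m n"

definition real_diag_mat :: "nat \<Rightarrow> (nat \<Rightarrow> real) \<Rightarrow> complex mat" where
  "real_diag_mat n d = mat n n (\<lambda>(i,j). if i = j then complex_of_real (d i) else 0)"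

text \<open>Functional calculus for a Hermitian n x n matrix A = U diag(d) U^*:
  f(A) = U diag(f(d_1),...,f(d_n)) U^*  (well defined, independent of the decomposition).\<close>
definition matfun :: "nat \<Rightarrow> (real \<Rightarrow> real) \<Rightarrow> complex mat \<Rightarrow> complex mat" where
  "matfun n f A = (SOME B. \<exists>U d. unitary_mat n U \<and>
       A = U * real_diag_mat n d * mat_adjoint U \<and>
       B = U * real_diag_mat n (\<lambda>i. f (d i)) * mat_adjoint U)"

definition operator_monotone :: "(real \<Rightarrow> real) \<Rightarrow> bool" where
  "operator_monotone f \<longleftrightarrow> (\<forall>x>0. f x > 0) \<and>
     (\<forall>m A B. posdef_mat m A \<and> posdef_mat m B \<and> loewner_le m A B \<longrightarrow>
        loewner_le m (matfun m f A) (matfun m f B))"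

definition class_F :: "(real \<Rightarrow> real) set" where
  "class_F = {f. operator_monotone f \<and> f 1 = 1}"

definition wq :: "nat \<Rightarrow> complex \<Rightarrow> complex mat \<Rightarrow> real" where
  "wq n q A = Sup {cmod ((A *\<^sub>v x) \<bullet>c y) | x y. x \<in> carrier_vec n \<and> y \<in> carrier_vec n \<and>
       vnorm x = 1 \<and> vnorm y = 1 \<and> x \<bullet>c y = q}"

end

theory Submission
  imports Defs "Jordan_Normal_Form.Spectral_Radius"
begin
lemma cinner_sum:
  assumes "y \<in> carrier_vec n"
  shows "x \<bullet>c y = (\<Sum>i<n. x $ i * cnj (y $ i))"
  using assms unfolding scalar_prod_def
  by (auto simp: atLeast0LessThan intro!: sum.cong)

lemma mult_mat_vec_sum:
  assumes "A \<in> carrier_mat n m" "x \<in> carrier_vec m" "i < n"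
  shows "(A *\<^sub>v x) $ i = (\<Sum>j<m. A $$ (i,j) * x $ j)"
proof -
  have "(A *\<^sub>v x) $ i = row A i \<bullet> x" using assms by simp
  also have "\<dots> = (\<Sum>j<m. A $$ (i,j) * x $ j)" unfolding scalar_prod_def
    using assms by (simp add: atLeast0LessThan)
  finally show ?thesis .
qed

lemma mult_mat_sum:
  assumes "A \<in> carrier_mat n k" "B \<in> carrier_mat k m" "i < n" "j < m"
  shows "(A * B) $$ (i,j) = (\<Sum>l<k. A $$ (i,l) * B $$ (l,j))"
proof -
  have "(A * B) $$ (i,j) = row A i \<bullet> col B j" using assms by simp
  also have "\<dots> = (\<Sum>l<k. A $$ (i,l) * B $$ (l,j))" unfolding scalar_prod_def
    using assms by (simp add: atLeast0LessThan)
  finally show ?thesis .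
qed

lemma adj_dim[simp]: "dim_row (mat_adjoint A) = dim_col A" "dim_col (mat_adjoint A) = dim_row A"
  unfolding mat_adjoint_def by simp_all

lemma adj_index[simp]: "i < dim_col A \<Longrightarrow> j < dim_row A \<Longrightarrow> mat_adjoint A $$ (i,j) = cnj (A $$ (j,i))"
  unfolding mat_adjoint_def by (simp add: mat_of_rows_index)

lemma adj_carrier[simp]: "A \<in> carrier_mat n m \<Longrightarrow> mat_adjoint A \<in> carrier_mat m n"
  unfolding carrier_mat_def by simp

lemma adj_adj[simp]: "mat_adjoint (mat_adjoint (A::complex mat)) = A"
  by (rule eq_matI, simp_all)

lemma adj_mult:
  assumes "A \<in> carrier_mat n k" "B \<in> carrier_mat k m"
  shows "mat_adjoint (A * B) = mat_adjoint B * mat_adjoint (A::complex mat)"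
proof (rule eq_matI)
  fix i j assume ij: "i < dim_row (mat_adjoint B * mat_adjoint A)" "j < dim_col (mat_adjoint B * mat_adjoint A)"
  then have i: "i < m" and j: "j < n" using assms by auto
  have "mat_adjoint (A * B) $$ (i,j) = cnj ((A*B) $$ (j,i))" using i j assms by auto
  also have "\<dots> = (\<Sum>l<k. cnj (A $$ (j,l)) * cnj (B $$ (l,i)))"
    using assms i j by (simp add: mult_mat_sum[OF assms] del: index_mult_mat)
  also have "\<dots> = (mat_adjoint B * mat_adjoint A) $$ (i,j)"
    using assms i j by (subst mult_mat_sum[of _ _ k], auto intro!: sum.cong)
  finally show "mat_adjoint (A * B) $$ (i,j) = (mat_adjoint B * mat_adjoint A) $$ (i,j)" .
qed (use assms in simp_all)

lemma adj_one[simp]: "mat_adjoint (1\<^sub>m n :: complex mat) = 1\<^sub>m n"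
  by (rule eq_matI, simp_all)

lemma inner_adj:
  assumes A: "A \<in> carrier_mat n m" and x: "x \<in> carrier_vec m" and y: "y \<in> carrier_vec n"
  shows "(A *\<^sub>v x) \<bullet>c y = x \<bullet>c (mat_adjoint A *\<^sub>v (y::complex vec))"
proof -
  have "(A *\<^sub>v x) \<bullet>c y = (\<Sum>i<n. (\<Sum>j<m. A $$ (i,j) * x $ j) * cnj (y $ i))"
    using assms by (simp add: cinner_sum[of _ n] mult_mat_vec_sum[OF A x] del: index_mult_mat_vec)
  also have "\<dots> = (\<Sum>i<n. \<Sum>j<m. A $$ (i,j) * x $ j * cnj (y $ i))"
    by (simp add: sum_distrib_right)
  also have "\<dots> = (\<Sum>j<m. \<Sum>i<n. A $$ (i,j) * x $ j * cnj (y $ i))"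
    by (rule sum.swap)
  also have "\<dots> = (\<Sum>j<m. x $ j * cnj (\<Sum>i<n. cnj (A $$ (i,j)) * y $ i))"
    by (simp add: sum_distrib_left mult_ac)
  also have "\<dots> = x \<bullet>c (mat_adjoint A *\<^sub>v y)"
  proof -
    have AH: "mat_adjoint A \<in> carrier_mat m n" using A by simp
    have "x \<bullet>c (mat_adjoint A *\<^sub>v y) = (\<Sum>j<m. x $ j * cnj ((mat_adjoint A *\<^sub>v y) $ j))"
      using AH y by (simp add: cinner_sum[of _ m])
    also have "\<dots> = (\<Sum>j<m. x $ j * cnj (\<Sum>i<n. cnj (A $$ (i,j)) * y $ i))"
      using A AH y by (intro sum.cong refl, simp add: mult_mat_vec_sum[OF AH y] del: index_mult_mat_vec)
    finally show ?thesis by simp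
  qed
  finally show ?thesis .
qed

lemma unitary_carrier: "unitary_mat n U \<Longrightarrow> U \<in> carrier_mat n n"
  unfolding unitary_mat_def by auto

lemma unitary_adj_mult: "unitary_mat n U \<Longrightarrow> mat_adjoint U * U = 1\<^sub>m n"
  unfolding unitary_mat_def by (auto intro: mat_mult_left_right_inverse)

lemma unitary_mult_adj: "unitary_mat n U \<Longrightarrow> U * mat_adjoint U = 1\<^sub>m n"
  unfolding unitary_mat_def by auto

lemma unitary_adj: "unitary_mat n U \<Longrightarrow> unitary_mat n (mat_adjoint U)"
  using unitary_adj_mult[of n U] unfolding unitary_mat_def by auto

lemma unitary_mult: assumes "unitary_mat n U" "unitary_mat n V" shows "unitary_mat n (U * V)"
proof -
  have U: "U \<in> carrier_mat n n" and V: "V \<in> carrier_mat n n" using assms unitary_carrier by auto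
  have UH: "mat_adjoint U \<in> carrier_mat n n" and VH: "mat_adjoint V \<in> carrier_mat n n" using U V by simp_all
  have "U * V * mat_adjoint (U * V) = U * V * (mat_adjoint V * mat_adjoint U)"
    by (simp add: adj_mult[OF U V])
  also have "\<dots> = U * (V * (mat_adjoint V * mat_adjoint U))"
    by (rule assoc_mult_mat[OF U V mult_carrier_mat[OF VH UH]])
  also have "V * (mat_adjoint V * mat_adjoint U) = (V * mat_adjoint V) * mat_adjoint U"
    by (rule assoc_mult_mat[OF V VH UH, symmetric])
  also have "\<dots> = mat_adjoint U" using assms(2) left_mult_one_mat[OF UH] unfolding unitary_mat_def by simp
  also have "U * mat_adjoint U = 1\<^sub>m n" using assms(1) unfolding unitary_mat_def by simp
  finally show ?thesis using U V unfolding unitary_mat_def by simp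
qed

lemma real_diag_carrier[simp]: "real_diag_mat n d \<in> carrier_mat n n"
  unfolding real_diag_mat_def by auto

lemma real_diag_index[simp]: "i < n \<Longrightarrow> j < n \<Longrightarrow> real_diag_mat n d $$ (i,j) = (if i = j then complex_of_real (d i) else 0)"
  unfolding real_diag_mat_def by auto

lemma cinner_smult_left:
  assumes "x \<in> carrier_vec n" "y \<in> carrier_vec n"
  shows "(c \<cdot>\<^sub>v x) \<bullet>c y = c * (x \<bullet>c (y::complex vec))"
  using assms by (simp add: cinner_sum[of _ n] sum_distrib_left mult.assoc)

lemma cinner_smult_right:
  assumes "x \<in> carrier_vec n" "y \<in> carrier_vec n"
  shows "x \<bullet>c (c \<cdot>\<^sub>v y) = cnj c * (x \<bullet>c (y::complex vec))"
  using assms by (simp add: cinner_sum[of _ n] sum_distrib_left mult_ac)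

lemma cinner_sym:
  assumes "x \<in> carrier_vec n" "y \<in> carrier_vec n"
  shows "x \<bullet>c y = cnj (y \<bullet>c (x::complex vec))"
  using assms by (simp add: cinner_sum[of _ n] mult_ac)

lemma cinner_self:
  assumes "x \<in> carrier_vec n"
  shows "x \<bullet>c (x::complex vec) = of_real (\<Sum>i<n. (cmod (x $ i))\<^sup>2)"
  unfolding cinner_sum[OF assms] of_real_sum by (intro sum.cong refl) (simp only: complex_norm_square)

lemma cinner_self_Re:
  assumes "x \<in> carrier_vec n"
  shows "Re (x \<bullet>c (x::complex vec)) = (\<Sum>i<n. (cmod (x $ i))\<^sup>2)"
  using cinner_self[OF assms] by simp

lemma cinner_self_real:
  assumes "x \<in> carrier_vec n"
  shows "x \<bullet>c (x::complex vec) = of_real (Re (x \<bullet>c x))"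
  using cinner_self[OF assms] by simp

lemma cinner_self_nonneg:
  assumes "x \<in> carrier_vec n"
  shows "Re (x \<bullet>c (x::complex vec)) \<ge> 0"
  unfolding cinner_self_Re[OF assms] by (intro sum_nonneg, simp)

lemma cinner_self_zero:
  assumes "x \<in> carrier_vec n" "Re (x \<bullet>c (x::complex vec)) = 0"
  shows "x = 0\<^sub>v n"
proof (rule eq_vecI)
  have "\<forall>i\<in>{..<n}. (cmod (x $ i))\<^sup>2 = 0"
    using assms cinner_self_Re[OF assms(1)] by (subst sum_nonneg_eq_0_iff[symmetric]) auto
  then show "\<And>i. i < dim_vec (0\<^sub>v n) \<Longrightarrow> x $ i = 0\<^sub>v n $ i" by auto
qed (use assms in simp)

lemma mult_mat_vec_smult:
  assumes "A \<in> carrier_mat n m" "x \<in> carrier_vec m"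
  shows "A *\<^sub>v (c \<cdot>\<^sub>v x) = c \<cdot>\<^sub>v (A *\<^sub>v (x::complex vec))"
  using assms by (intro mult_mat_vec) 

lemma adjmul_index:
  assumes X: "X \<in> carrier_mat k n" and Y: "Y \<in> carrier_mat k m" and i: "i < n" and j: "j < m"
  shows "(mat_adjoint X * Y) $$ (i,j) = col Y j \<bullet>c col (X::complex mat) i"
proof -
  have XH: "mat_adjoint X \<in> carrier_mat n k" using X by simp
  have "(mat_adjoint X * Y) $$ (i,j) = (\<Sum>l<k. cnj (X $$ (l,i)) * Y $$ (l,j))"
    using X Y i j by (simp add: mult_mat_sum[OF XH Y i j] del: index_mult_mat)
  also have "\<dots> = col Y j \<bullet>c col X i"
    using X Y i j by (subst cinner_sum[of _ k], simp, intro sum.cong, auto)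
  finally show ?thesis .
qed

lemma real_diag_dim[simp]: "dim_row (real_diag_mat n d) = n" "dim_col (real_diag_mat n d) = n"
  unfolding real_diag_mat_def by simp_all

definition ext1 :: "complex \<Rightarrow> complex mat \<Rightarrow> complex mat" where
  "ext1 c X = mat (Suc (dim_row X)) (Suc (dim_col X))
     (\<lambda>(i,j). if i = 0 \<and> j = 0 then c else if i = 0 \<or> j = 0 then 0 else X $$ (i - 1, j - 1))"

lemma ext1_carrier[simp]: "X \<in> carrier_mat m m \<Longrightarrow> ext1 c X \<in> carrier_mat (Suc m) (Suc m)"
  unfolding ext1_def carrier_mat_def by simp

lemma ext1_dim[simp]: "dim_row (ext1 c X) = Suc (dim_row X)" "dim_col (ext1 c X) = Suc (dim_col X)"
  unfolding ext1_def by simp_all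

lemma ext1_index:
  assumes "i < Suc (dim_row X)" "j < Suc (dim_col X)"
  shows "ext1 c X $$ (i,j) = (if i = 0 \<and> j = 0 then c else if i = 0 \<or> j = 0 then 0 else X $$ (i - 1, j - 1))"
  using assms unfolding ext1_def by simp

lemma ext1_mult:
  assumes X: "X \<in> carrier_mat m m" and Y: "Y \<in> carrier_mat m m"
  shows "ext1 c X * ext1 d Y = ext1 (c * d) (X * Y)"
proof (rule eq_matI)
  have XY: "X * Y \<in> carrier_mat m m" using X Y by simp
  fix i j assume "i < dim_row (ext1 (c * d) (X * Y))" "j < dim_col (ext1 (c * d) (X * Y))"
  then have i: "i < Suc m" and j: "j < Suc m" using XY by auto
  have "(ext1 c X * ext1 d Y) $$ (i,j) = (\<Sum>l<Suc m. ext1 c X $$ (i,l) * ext1 d Y $$ (l,j))"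
    using X Y i j by (intro mult_mat_sum) auto
  also have "\<dots> = ext1 c X $$ (i,0) * ext1 d Y $$ (0,j) + (\<Sum>l<m. ext1 c X $$ (i,Suc l) * ext1 d Y $$ (Suc l,j))"
    by (rule sum.lessThan_Suc_shift)
  also have "\<dots> = ext1 (c * d) (X * Y) $$ (i,j)"
  proof (cases i)
    case 0
    then show ?thesis using X Y XY i j by (simp add: ext1_index)
  next
    case (Suc i')
    then have i': "i' < m" using i by simp
    show ?thesis
    proof (cases j)
      case 0
      then show ?thesis using Suc X Y XY i j by (simp add: ext1_index)
    next
      case (Suc j')
      then have j': "j' < m" using j by simp
      have "(\<Sum>l<m. ext1 c X $$ (i,Suc l) * ext1 d Y $$ (Suc l,j)) = (\<Sum>l<m. X $$ (i',l) * Y $$ (l,j'))"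
        using X Y i j \<open>i = Suc i'\<close> Suc by (intro sum.cong) (auto simp: ext1_index)
      also have "\<dots> = (X * Y) $$ (i',j')" using X Y i' j' by (simp add: mult_mat_sum[OF X Y] del: index_mult_mat)
      finally show ?thesis using X Y XY i j \<open>i = Suc i'\<close> Suc by (simp add: ext1_index)
    qed
  qed
  finally show "(ext1 c X * ext1 d Y) $$ (i,j) = ext1 (c * d) (X * Y) $$ (i,j)" .
qed (use X Y in \<open>simp_all add: ext1_def\<close>)

lemma ext1_adj:
  assumes X: "X \<in> carrier_mat m m"
  shows "mat_adjoint (ext1 c X) = ext1 (cnj c) (mat_adjoint X)"
proof (rule eq_matI)
  fix i j assume "i < dim_row (ext1 (cnj c) (mat_adjoint X))" "j < dim_col (ext1 (cnj c) (mat_adjoint X))"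
  then have i: "i < Suc m" and j: "j < Suc m" using X by (auto simp: ext1_def)
  have XH: "mat_adjoint X \<in> carrier_mat m m" using X by simp
  have e: "ext1 c X \<in> carrier_mat (Suc m) (Suc m)" using X by simp
  show "mat_adjoint (ext1 c X) $$ (i,j) = ext1 (cnj c) (mat_adjoint X) $$ (i,j)"
    using i j X XH e by (cases i; cases j) (auto simp: ext1_index)
qed (use X in \<open>simp_all add: ext1_def\<close>)

lemma ext1_one: "ext1 1 (1\<^sub>m m) = 1\<^sub>m (Suc m)"
proof (rule eq_matI)
  fix i j assume "i < dim_row (1\<^sub>m (Suc m) :: complex mat)" "j < dim_col (1\<^sub>m (Suc m) :: complex mat)"
  then show "ext1 1 (1\<^sub>m m) $$ (i,j) = 1\<^sub>m (Suc m) $$ (i,j)"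
    by (cases i; cases j) (auto simp: ext1_index)
qed (simp_all add: ext1_def)

lemma ext1_diag: "ext1 (complex_of_real r) (real_diag_mat m d) = real_diag_mat (Suc m) (case_nat r d)"
proof (rule eq_matI)
  fix i j assume "i < dim_row (real_diag_mat (Suc m) (case_nat r d))" "j < dim_col (real_diag_mat (Suc m) (case_nat r d))"
  then have i: "i < Suc m" and j: "j < Suc m" by (auto simp: real_diag_mat_def)
  show "ext1 (complex_of_real r) (real_diag_mat m d) $$ (i,j) = real_diag_mat (Suc m) (case_nat r d) $$ (i,j)"
    using i j by (cases i; cases j) (auto simp: ext1_index)
qed (simp_all add: ext1_def real_diag_mat_def)

lemma unitary_ext1: "unitary_mat m V \<Longrightarrow> unitary_mat (Suc m) (ext1 1 V)"
  unfolding unitary_mat_def by (auto simp: ext1_adj ext1_mult ext1_one)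

lemma unitary_cancel1:
  assumes "unitary_mat n U" "X \<in> carrier_mat n k"
  shows "U * (mat_adjoint U * X) = X"
proof -
  have U: "U \<in> carrier_mat n n" using assms unitary_carrier by auto
  have UH: "mat_adjoint U \<in> carrier_mat n n" using U by simp
  have "U * (mat_adjoint U * X) = (U * mat_adjoint U) * X"
    by (rule assoc_mult_mat[OF U UH assms(2), symmetric])
  also have "\<dots> = X" using unitary_mult_adj[OF assms(1)] assms(2) by simp
  finally show ?thesis .
qed

lemma unitary_cancel2:
  assumes "unitary_mat n U" "X \<in> carrier_mat n k"
  shows "mat_adjoint U * (U * X) = X"
proof -
  have U: "U \<in> carrier_mat n n" using assms unitary_carrier by auto
  have UH: "mat_adjoint U \<in> carrier_mat n n" using U by simp
  have "mat_adjoint U * (U * X) = (mat_adjoint U * U) * X"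
    by (rule assoc_mult_mat[OF UH U assms(2), symmetric])
  also have "\<dots> = X" using unitary_adj_mult[OF assms(1)] assms(2) by simp
  finally show ?thesis .
qed

lemma hermitian_carrier: "hermitian_mat n A \<Longrightarrow> A \<in> carrier_mat n n"
  unfolding hermitian_mat_def by simp

lemma spectral:
  assumes "hermitian_mat n A"
  shows "\<exists>U d. unitary_mat n U \<and> A = U * real_diag_mat n d * mat_adjoint U"
  using assms
proof (induction n arbitrary: A)
  case 0
  then have A: "A \<in> carrier_mat 0 0" by (simp add: hermitian_mat_def)
  have "unitary_mat 0 (1\<^sub>m 0)" unfolding unitary_mat_def by simp
  moreover have "A = 1\<^sub>m 0 * real_diag_mat 0 (\<lambda>_. 0) * mat_adjoint (1\<^sub>m 0)"
    using A by (intro eq_matI) auto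
  ultimately show ?case by blast
next
  case (Suc m)
  define n where "n = Suc m"
  have A: "A \<in> carrier_mat n n" and AH: "mat_adjoint A = A"
    using Suc.prems by (auto simp: hermitian_mat_def n_def)
  obtain e where "e \<in> spectrum A" using spectrum_non_empty[OF A] n_def by auto
  then have "eigenvalue A e" by (simp add: spectrum_def)
  then obtain v where ev: "eigenvector A v e" unfolding eigenvalue_def by auto
  then have v: "v \<in> carrier_vec n" and v0: "v \<noteq> 0\<^sub>v n" and Av: "A *\<^sub>v v = e \<cdot>\<^sub>v v"
    using A unfolding eigenvector_def by auto
  interpret cof_vec_space n "TYPE(complex)" .
  define b where "b = basis_completion v"
  from basis_completion[OF v v0, folded b_def]
  have dist_b: "distinct b" and indep: "\<not> lin_dep (set b)" and bc: "set b \<subseteq> carrier_vec n"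
    and hdb: "hd b = v" and len_b: "length b = n" by auto
  from hdb len_b n_def obtain vs where bv: "b = v # vs" by (cases b, auto)
  define ws where "ws = gram_schmidt n b"
  from gram_schmidt_result[OF bc dist_b indep ws_def]
  have wsc: "set ws \<subseteq> carrier_vec n" and orth: "corthogonal ws" and len: "length ws = n"
    using len_b by auto
  have "hd ws = v" unfolding ws_def bv by (rule gram_schmidt_hd[OF v])
  then have ws0: "ws ! 0 = v" using len n_def by (cases ws) auto
  have wsi: "ws ! i \<in> carrier_vec n" if "i < n" for i
    using wsc len that nth_mem by blast
  have wpos: "Re (ws ! i \<bullet>c ws ! i) > 0" if i: "i < n" for i
  proof -
    have "ws ! i \<bullet>c ws ! i \<noteq> 0" using corthogonalD[OF orth, of i i] i len by simp
    then have "Re (ws ! i \<bullet>c ws ! i) \<noteq> 0" using cinner_self_real[OF wsi[OF i]] by auto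
    then show ?thesis using cinner_self_nonneg[OF wsi[OF i]] by linarith
  qed
  define nrm where "nrm w = complex_of_real (1 / sqrt (Re (w \<bullet>c w))) \<cdot>\<^sub>v w" for w
  define us where "us = map nrm ws"
  have lus: "length us = n" using len us_def by simp
  have usi: "us ! i = nrm (ws ! i)" if "i < n" for i using that len us_def by simp
  have usc: "us ! i \<in> carrier_vec n" if "i < n" for i
    using usi[OF that] wsi[OF that] unfolding nrm_def by simp
  have uorth: "us ! i \<bullet>c us ! j = (if i = j then 1 else 0)" if i: "i < n" and j: "j < n" for i j
  proof -
    have "us ! i \<bullet>c us ! j = complex_of_real (1 / sqrt (Re (ws ! i \<bullet>c ws ! i))) *
       cnj (complex_of_real (1 / sqrt (Re (ws ! j \<bullet>c ws ! j)))) * (ws ! i \<bullet>c ws ! j)"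
      unfolding usi[OF i] usi[OF j] nrm_def
      using wsi[OF i] wsi[OF j]
      by (simp add: cinner_smult_left[of _ n] cinner_smult_right[of _ n])
    also have "\<dots> = (if i = j then 1 else 0)"
    proof (cases "i = j")
      case True
      define r where "r = Re (ws ! i \<bullet>c ws ! i)"
      have p: "r > 0" unfolding r_def by (rule wpos[OF i])
      have eq: "ws ! i \<bullet>c ws ! i = complex_of_real r" unfolding r_def by (rule cinner_self_real[OF wsi[OF i]])
      have sq: "sqrt r * sqrt r = r" using p by simp
      have r1: "1 / sqrt r * (1 / sqrt r) * r = 1" using p sq by (simp add: field_simps)
      have "complex_of_real (1 / sqrt (Re (ws ! i \<bullet>c ws ! i))) *
         cnj (complex_of_real (1 / sqrt (Re (ws ! i \<bullet>c ws ! i)))) * (ws ! i \<bullet>c ws ! i) = 1" (is "?X = 1")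
        unfolding r_def[symmetric] eq
        by (simp only: Re_complex_of_real complex_cnj_complex_of_real of_real_mult[symmetric] r1 of_real_1)
      then show ?thesis unfolding True[symmetric] by (simp only: if_P[OF refl])
    next
      case False
      then have "ws ! i \<bullet>c ws ! j = 0" using corthogonalD[OF orth, of i j] i j len by simp
      then show ?thesis using False by simp
    qed
    finally show ?thesis .
  qed
  define W where "W = mat_of_cols n us"
  have W: "W \<in> carrier_mat n n" unfolding W_def using lus mat_of_cols_carrier(1)[of n us] by simp
  have WH: "mat_adjoint W \<in> carrier_mat n n" using W by simp
  have colW: "col W j = us ! j" if "j < n" for j
    unfolding W_def using that lus usc[OF that] by simp
  have WHW: "mat_adjoint W * W = 1\<^sub>m n"
  proof (rule eq_matI)
    fix i j assume "i < dim_row (1\<^sub>m n :: complex mat)" "j < dim_col (1\<^sub>m n :: complex mat)"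
    then have i: "i < n" and j: "j < n" by auto
    show "(mat_adjoint W * W) $$ (i,j) = 1\<^sub>m n $$ (i,j)"
      using adjmul_index[OF W W i j] colW[OF i] colW[OF j] uorth[OF j i] i j by auto
  qed (use W in simp_all)
  have WWH: "W * mat_adjoint W = 1\<^sub>m n" by (rule mat_mult_left_right_inverse[OF WH W WHW])
  have uW: "unitary_mat n W" unfolding unitary_mat_def using W WWH by simp
  have us0: "us ! 0 = complex_of_real (1 / sqrt (Re (v \<bullet>c v))) \<cdot>\<^sub>v v"
    using usi[of 0] ws0 n_def unfolding nrm_def by simp
  have Au0: "A *\<^sub>v us ! 0 = e \<cdot>\<^sub>v us ! 0"
    unfolding us0 using A v Av by (intro eq_vecI) (auto simp: mult_mat_vec)
  define B where "B = mat_adjoint W * (A * W)"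
  have AW: "A * W \<in> carrier_mat n n" using A W by simp
  have B: "B \<in> carrier_mat n n" unfolding B_def using AW WH by simp
  have Bij: "B $$ (i,j) = (A *\<^sub>v us ! j) \<bullet>c us ! i" if i: "i < n" and j: "j < n" for i j
    unfolding B_def adjmul_index[OF W AW i j] col_mult2[OF A W j] colW[OF i] colW[OF j] ..
  have BH: "mat_adjoint B = B"
  proof (rule eq_matI)
    fix i j assume "i < dim_row B" "j < dim_col B"
    then have i: "i < n" and j: "j < n" using B by auto
    have "mat_adjoint B $$ (i,j) = cnj ((A *\<^sub>v us ! i) \<bullet>c us ! j)"
      using B i j Bij[OF j i] by simp
    also have "\<dots> = cnj (us ! i \<bullet>c (A *\<^sub>v us ! j))"
      using inner_adj[OF A usc[OF i] usc[OF j]] AH by simp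
    also have "\<dots> = (A *\<^sub>v us ! j) \<bullet>c us ! i"
      using cinner_sym[of "A *\<^sub>v us ! j" n "us ! i"] A usc[OF i] usc[OF j] by simp
    finally show "mat_adjoint B $$ (i,j) = B $$ (i,j)" using Bij[OF i j] by simp
  qed (use B in simp_all)
  have Bi0: "B $$ (i,0) = (if i = 0 then e else 0)" if i: "i < n" for i
  proof -
    have "B $$ (i,0) = (e \<cdot>\<^sub>v us ! 0) \<bullet>c us ! i" using Bij[OF i] n_def Au0 by simp
    also have "\<dots> = e * (us ! 0 \<bullet>c us ! i)"
      using n_def usc[OF i] usc[of 0] by (simp add: cinner_smult_left[of _ n])
    finally show ?thesis using uorth[of 0 i] i n_def by auto
  qed
  have B0j: "B $$ (0,j) = 0" if j: "j < n" "j \<noteq> 0" for j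
  proof -
    have "B $$ (0,j) = mat_adjoint B $$ (0,j)" using BH by simp
    also have "\<dots> = cnj (B $$ (j,0))" using B j n_def by simp
    finally show ?thesis using Bi0[OF j(1)] j by simp
  qed
  have ereal: "complex_of_real (Re e) = e"
  proof -
    have "B $$ (0,0) = mat_adjoint B $$ (0,0)" using BH by simp
    also have "\<dots> = cnj (B $$ (0,0))" using B n_def by simp
    finally have "e = cnj e" using Bi0[of 0] n_def by simp
    then show ?thesis by (metis Reals_cnj_iff complex_is_Real_iff of_real_Re)
  qed
  define C where "C = mat m m (\<lambda>(i,j). B $$ (Suc i, Suc j))"
  have C: "C \<in> carrier_mat m m" unfolding C_def by simp
  have hC: "hermitian_mat m C"
    unfolding hermitian_mat_def
  proof (intro conjI C eq_matI)
    fix i j assume "i < dim_row C" "j < dim_col C"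
    then have i: "i < m" and j: "j < m" using C by auto
    have "mat_adjoint C $$ (i,j) = cnj (B $$ (Suc j, Suc i))" using C i j unfolding C_def by simp
    also have "\<dots> = mat_adjoint B $$ (Suc i, Suc j)" using B i j n_def by simp
    finally show "mat_adjoint C $$ (i,j) = C $$ (i,j)" using BH i j unfolding C_def by simp
  qed (use C in simp_all)
  obtain V d' where V: "unitary_mat m V" and CV: "C = V * real_diag_mat m d' * mat_adjoint V"
    using Suc.IH[OF hC] by blast
  have Vc: "V \<in> carrier_mat m m" using V unitary_carrier by auto
  have BC: "B = ext1 e C"
  proof (rule eq_matI)
    fix i j assume "i < dim_row (ext1 e C)" "j < dim_col (ext1 e C)"
    then have i: "i < n" and j: "j < n" using C n_def by auto
    show "B $$ (i,j) = ext1 e C $$ (i,j)"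
    proof (cases i)
      case 0
      then show ?thesis using i j C n_def Bi0 B0j by (cases j) (auto simp: ext1_index)
    next
      case (Suc i')
      then show ?thesis using i j C n_def Bi0 unfolding C_def by (cases j) (auto simp: ext1_index)
    qed
  qed (use B C n_def in simp_all)
  define V' where "V' = ext1 1 V"
  define d where "d = case_nat (Re e) d'"
  have uV': "unitary_mat n V'" unfolding V'_def n_def by (rule unitary_ext1[OF V])
  have V'c: "V' \<in> carrier_mat n n" using uV' unitary_carrier by auto
  have D: "real_diag_mat m d' \<in> carrier_mat m m" by simp
  have BV: "B = V' * real_diag_mat n d * mat_adjoint V'"
  proof -
    have "V' * real_diag_mat n d * mat_adjoint V' =
          ext1 1 V * ext1 (complex_of_real (Re e)) (real_diag_mat m d') * ext1 (cnj 1) (mat_adjoint V)"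
      unfolding V'_def d_def n_def ext1_diag ext1_adj[OF Vc] by simp
    also have "\<dots> = ext1 e (V * real_diag_mat m d' * mat_adjoint V)"
      using Vc D ereal ext1_mult[OF mult_carrier_mat[OF Vc D] adj_carrier[OF Vc]] by (simp add: ext1_mult)
    finally show ?thesis using BC CV by simp
  qed
  define U where "U = W * V'"
  have uU: "unitary_mat n U" unfolding U_def by (rule unitary_mult[OF uW uV'])
  have "A = W * B * mat_adjoint W"
  proof -
    have "W * B * mat_adjoint W = W * (mat_adjoint W * (A * W)) * mat_adjoint W" unfolding B_def ..
    also have "W * (mat_adjoint W * (A * W)) = A * W" by (rule unitary_cancel1[OF uW AW])
    also have "A * W * mat_adjoint W = A * (W * mat_adjoint W)" by (rule assoc_mult_mat[OF A W WH])
    finally show ?thesis using WWH A by simp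
  qed
  also have "\<dots> = U * real_diag_mat n d * mat_adjoint U"
  proof -
    have Dn: "real_diag_mat n d \<in> carrier_mat n n" by simp
    have V'H: "mat_adjoint V' \<in> carrier_mat n n" using V'c by simp
    have "W * B * mat_adjoint W = W * (V' * real_diag_mat n d * mat_adjoint V') * mat_adjoint W"
      using BV by simp
    also have "\<dots> = W * (V' * real_diag_mat n d * mat_adjoint V' * mat_adjoint W)"
      by (rule assoc_mult_mat[OF W _ WH], meson mult_carrier_mat V'c Dn V'H)
    also have "V' * real_diag_mat n d * mat_adjoint V' * mat_adjoint W = V' * real_diag_mat n d * (mat_adjoint V' * mat_adjoint W)"
      using mult_carrier_mat[OF V'c Dn] V'H WH by (rule assoc_mult_mat)
    also have "W * (V' * real_diag_mat n d * (mat_adjoint V' * mat_adjoint W)) = (W * (V' * real_diag_mat n d)) * (mat_adjoint V' * mat_adjoint W)"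
      using assoc_mult_mat[OF W mult_carrier_mat[OF V'c Dn] mult_carrier_mat[OF V'H WH]] by simp
    also have "\<dots> = U * real_diag_mat n d * mat_adjoint U"
      unfolding U_def using adj_mult[OF W V'c] assoc_mult_mat[OF W V'c Dn] by simp
    finally show ?thesis .
  qed
  finally show ?case using uU n_def by blast
qed

lemma sq_mult: "(A :: complex mat) \<in> carrier_mat n n \<Longrightarrow> B \<in> carrier_mat n n \<Longrightarrow> A * B \<in> carrier_mat n n"
  by (rule mult_carrier_mat)

lemma sq_assoc: "(A :: complex mat) \<in> carrier_mat n n \<Longrightarrow> B \<in> carrier_mat n n \<Longrightarrow> C \<in> carrier_mat n n \<Longrightarrow>
  A * B * C = A * (B * C)"
  by (rule assoc_mult_mat)

lemma sq_one_l: "(A :: complex mat) \<in> carrier_mat n n \<Longrightarrow> 1\<^sub>m n * A = A" by (rule left_mult_one_mat)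
lemma sq_one_r: "(A :: complex mat) \<in> carrier_mat n n \<Longrightarrow> A * 1\<^sub>m n = A" by (rule right_mult_one_mat)

lemma unitary_cancel2_sq:
  assumes "unitary_mat n U" "X \<in> carrier_mat n n"
  shows "mat_adjoint U * (U * X) = X"
  using unitary_cancel2[OF assms] .

lemma unitary_cancel1_sq:
  assumes "unitary_mat n U" "X \<in> carrier_mat n n"
  shows "U * (mat_adjoint U * X) = X"
  using unitary_cancel1[OF assms] .

lemma diag_right:
  assumes X: "X \<in> carrier_mat n n" and i: "i < n" and j: "j < n"
  shows "(X * real_diag_mat n d) $$ (i,j) = X $$ (i,j) * complex_of_real (d j)"
proof -
  have "(X * real_diag_mat n d) $$ (i,j) = (\<Sum>l<n. X $$ (i,l) * real_diag_mat n d $$ (l,j))"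
    using X i j by (intro mult_mat_sum) auto
  also have "\<dots> = (\<Sum>l<n. if l = j then X $$ (i,j) * complex_of_real (d j) else 0)"
    using j by (intro sum.cong refl) auto
  finally show ?thesis using j by simp
qed

lemma diag_left:
  assumes X: "X \<in> carrier_mat n n" and i: "i < n" and j: "j < n"
  shows "(real_diag_mat n d * X) $$ (i,j) = complex_of_real (d i) * X $$ (i,j)"
proof -
  have "(real_diag_mat n d * X) $$ (i,j) = (\<Sum>l<n. real_diag_mat n d $$ (i,l) * X $$ (l,j))"
    using X i j by (intro mult_mat_sum) auto
  also have "\<dots> = (\<Sum>l<n. if l = i then complex_of_real (d i) * X $$ (i,j) else 0)"
    using i by (intro sum.cong refl) auto
  finally show ?thesis using i by simp
qed

lemma fc_unique:
  assumes uU: "unitary_mat n U" and uW: "unitary_mat n W"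
    and eq: "U * real_diag_mat n d * mat_adjoint U = W * real_diag_mat n e * mat_adjoint W"
  shows "U * real_diag_mat n (\<lambda>i. f (d i)) * mat_adjoint U = W * real_diag_mat n (\<lambda>i. f (e i)) * mat_adjoint W"
proof -
  have U: "U \<in> carrier_mat n n" and W: "W \<in> carrier_mat n n" using uU uW unitary_carrier by auto
  have UH: "mat_adjoint U \<in> carrier_mat n n" and WH: "mat_adjoint W \<in> carrier_mat n n" using U W by auto
  define D where "D = real_diag_mat n d"
  define E where "E = real_diag_mat n e"
  define FD where "FD = real_diag_mat n (\<lambda>i. f (d i))"
  define FE where "FE = real_diag_mat n (\<lambda>i. f (e i))"
  have D: "D \<in> carrier_mat n n" and E: "E \<in> carrier_mat n n" and FD: "FD \<in> carrier_mat n n" and FE: "FE \<in> carrier_mat n n"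
    unfolding D_def E_def FD_def FE_def by auto
  note cs = U W UH WH D E FD FE
  note sq = sq_mult[where n=n] sq_assoc[where n=n] sq_one_l[where n=n] sq_one_r[where n=n] unitary_cancel2_sq[OF uU] unitary_cancel2_sq[OF uW]
    unitary_cancel1_sq[OF uU] unitary_cancel1_sq[OF uW] unitary_adj_mult[OF uU] unitary_adj_mult[OF uW]
    unitary_mult_adj[OF uU] unitary_mult_adj[OF uW] UH WH
  define K where "K = mat_adjoint W * U"
  have K: "K \<in> carrier_mat n n" unfolding K_def using cs by (simp add: sq_mult)
  have "mat_adjoint W * (U * D * mat_adjoint U) * U = mat_adjoint W * (W * E * mat_adjoint W) * U"
    using eq unfolding D_def E_def by simp
  then have KD0: "mat_adjoint W * (U * D) = E * (mat_adjoint W * U)" using cs by (simp add: sq)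
  have KD: "K * D = E * K" unfolding K_def using KD0 sq_assoc[OF WH U D] by simp
  have KF: "K * FD = FE * K"
  proof (rule eq_matI)
    fix i j assume "i < dim_row (FE * K)" "j < dim_col (FE * K)"
    then have i: "i < n" and j: "j < n" using FE K by auto
    have "(K * D) $$ (i,j) = (E * K) $$ (i,j)" using KD by simp
    then have "K $$ (i,j) * complex_of_real (d j) = complex_of_real (e i) * K $$ (i,j)"
      unfolding D_def E_def using diag_right[OF K i j] diag_left[OF K i j] by simp
    then have "K $$ (i,j) = 0 \<or> d j = e i" by (auto simp: mult.commute)
    then have "K $$ (i,j) * complex_of_real (f (d j)) = complex_of_real (f (e i)) * K $$ (i,j)"
      by (auto simp: mult.commute)
    then show "(K * FD) $$ (i,j) = (FE * K) $$ (i,j)"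
      unfolding FD_def FE_def using diag_right[OF K i j] diag_left[OF K i j] by simp
  qed (use K FD FE in simp_all)
  have "U * FD * mat_adjoint U = W * (K * FD) * mat_adjoint U"
    unfolding K_def using cs by (simp add: sq)
  also have "\<dots> = W * (FE * K) * mat_adjoint U" using KF by simp
  also have "\<dots> = W * FE * mat_adjoint W"
    unfolding K_def using cs by (simp add: sq)
  finally show ?thesis unfolding FD_def FE_def .
qed

lemma matfun_eq:
  assumes uU: "unitary_mat n U" and A: "A = U * real_diag_mat n d * mat_adjoint U"
  shows "matfun n f A = U * real_diag_mat n (\<lambda>i. f (d i)) * mat_adjoint U"
proof -
  define P where "P B = (\<exists>U d. unitary_mat n U \<and> A = U * real_diag_mat n d * mat_adjoint U \<and>
       B = U * real_diag_mat n (\<lambda>i. f (d i)) * mat_adjoint U)" for B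
  have "P (U * real_diag_mat n (\<lambda>i. f (d i)) * mat_adjoint U)" unfolding P_def using uU A by blast
  then have "P (SOME B. P B)" by (rule someI)
  then obtain W e where uW: "unitary_mat n W" and AW: "A = W * real_diag_mat n e * mat_adjoint W"
    and M: "(SOME B. P B) = W * real_diag_mat n (\<lambda>i. f (e i)) * mat_adjoint W" unfolding P_def by blast
  have "matfun n f A = (SOME B. P B)" unfolding matfun_def P_def ..
  also have "\<dots> = U * real_diag_mat n (\<lambda>i. f (d i)) * mat_adjoint U"
    unfolding M by (rule fc_unique[OF uW uU], use A AW in simp)
  finally show ?thesis .
qed

lemma matfun_spectral:
  assumes "hermitian_mat n A"
  shows "\<exists>U d. unitary_mat n U \<and> A = U * real_diag_mat n d * mat_adjoint U \<and>
     matfun n f A = U * real_diag_mat n (\<lambda>i. f (d i)) * mat_adjoint U"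
  using spectral[OF assms] matfun_eq by blast

lemma cinner_add_left:
  assumes "x \<in> carrier_vec n" "w \<in> carrier_vec n" "y \<in> carrier_vec n"
  shows "(x + w) \<bullet>c y = x \<bullet>c y + w \<bullet>c (y::complex vec)"
  using assms by (simp add: cinner_sum[of _ n] sum.distrib distrib_right)

lemma cinner_add_right:
  assumes "x \<in> carrier_vec n" "w \<in> carrier_vec n" "y \<in> carrier_vec n"
  shows "y \<bullet>c (x + w) = y \<bullet>c x + y \<bullet>c (w::complex vec)"
  using assms by (simp add: cinner_sum[of _ n] sum.distrib distrib_left)

lemma vnorm1_iff:
  assumes "x \<in> carrier_vec n"
  shows "vnorm x = 1 \<longleftrightarrow> x \<bullet>c x = 1"
proof -
  have "vnorm x = 1 \<longleftrightarrow> Re (x \<bullet>c x) = 1" unfolding vnorm_def by simp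
  also have "\<dots> \<longleftrightarrow> x \<bullet>c x = 1"
    using cinner_self_real[OF assms] by (metis Re_complex_of_real of_real_1 one_complex.sel(1))
  finally show ?thesis .
qed

lemma normalize_unit:
  assumes w: "w \<in> carrier_vec n" and p: "Re (w \<bullet>c w) > 0"
  shows "(complex_of_real (1 / sqrt (Re (w \<bullet>c w))) \<cdot>\<^sub>v w) \<bullet>c (complex_of_real (1 / sqrt (Re (w \<bullet>c w))) \<cdot>\<^sub>v w) = 1"
proof -
  define r where "r = Re (w \<bullet>c w)"
  have eq: "w \<bullet>c w = complex_of_real r" unfolding r_def by (rule cinner_self_real[OF w])
  have sq: "sqrt r * sqrt r = r" using p r_def by simp
  have r1: "1 / sqrt r * (1 / sqrt r) * r = 1" using p sq r_def by (simp add: field_simps)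
  have rp: "r > 0" using p r_def by simp
  show ?thesis
    using w rp unfolding r_def[symmetric]
    by (simp add: cinner_smult_left[of _ n] cinner_smult_right[of _ n] eq of_real_mult[symmetric] r1 del: of_real_mult)
qed

lemma unit0_self:
  assumes "n > 0"
  shows "unit_vec n 0 \<bullet>c unit_vec n 0 = (1::complex)"
proof -
  have "unit_vec n 0 \<bullet>c unit_vec n 0 = (\<Sum>i<n. (if i = 0 then 1 else 0) * cnj (if i = 0 then 1 else (0::complex)))"
    by (simp add: cinner_sum[of _ n])
  also have "\<dots> = (\<Sum>i<n. if i = 0 then 1 else 0)" by (rule sum.cong) auto
  finally show ?thesis using assms by simp
qed

lemma orth_unit_exists:
  assumes n: "n \<ge> 2" and x: "(x::complex vec) \<in> carrier_vec n"
  shows "\<exists>z \<in> carrier_vec n. z \<bullet>c z = 1 \<and> x \<bullet>c z = 0"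
proof (cases "x $ 0 = 0 \<and> x $ 1 = 0")
  case True
  have "unit_vec n 0 \<bullet>c unit_vec n 0 = (1::complex)"
    using n by (intro unit0_self) simp
  moreover have "x \<bullet>c unit_vec n 0 = 0"
    using n x True by (simp add: cinner_sum[of _ n] unit_vec_def)
  ultimately show ?thesis using n by (intro bexI[of _ "unit_vec n 0"]) auto
next
  case False
  define w where "w = vec n (\<lambda>i. if i = 0 then - cnj (x $ 1) else if i = 1 then cnj (x $ 0) else 0)"
  have w: "w \<in> carrier_vec n" unfolding w_def by simp
  have two: "(\<Sum>i<n. f i) = f 0 + f 1" if "\<And>i. i \<ge> 2 \<Longrightarrow> i < n \<Longrightarrow> f i = (0::complex)" for f
  proof -
    have "(\<Sum>i<n. f i) = (\<Sum>i\<in>{0,1}. f i)"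
      using n that by (intro sum.mono_neutral_right) auto
    then show ?thesis by simp
  qed
  have xw: "x \<bullet>c w = 0"
    unfolding cinner_sum[OF w] using n by (subst two) (auto simp: w_def)
  have ww: "w \<bullet>c w = complex_of_real ((cmod (x $ 1))\<^sup>2 + (cmod (x $ 0))\<^sup>2)"
    unfolding cinner_sum[OF w] using n by (subst two) (auto simp: w_def complex_norm_square[symmetric] mult.commute)
  have p: "Re (w \<bullet>c w) > 0" unfolding ww using False by (auto simp: add_pos_nonneg add_nonneg_pos)
  define z where "z = complex_of_real (1 / sqrt (Re (w \<bullet>c w))) \<cdot>\<^sub>v w"
  have "z \<bullet>c z = 1" unfolding z_def by (rule normalize_unit[OF w p])
  moreover have "x \<bullet>c z = 0" unfolding z_def using x w xw by (simp add: cinner_smult_right[of _ n])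
  ultimately show ?thesis using w unfolding z_def by (intro bexI[of _ z]) (auto simp: z_def)
qed

definition wset :: "nat \<Rightarrow> complex \<Rightarrow> complex mat \<Rightarrow> real set" where
  "wset n q A = {cmod ((A *\<^sub>v x) \<bullet>c y) | x y. x \<in> carrier_vec n \<and> y \<in> carrier_vec n \<and>
       vnorm x = 1 \<and> vnorm y = 1 \<and> x \<bullet>c y = q}"

lemma wq_wset: "wq n q A = Sup (wset n q A)"
  unfolding wq_def wset_def ..

lemma wset_nonempty:
  assumes n: "n \<ge> 2" and q: "cmod q \<le> 1"
  shows "wset n q A \<noteq> {}"
proof -
  define x :: "complex vec" where "x = unit_vec n 0"
  have x: "x \<in> carrier_vec n" unfolding x_def by simp
  have xx: "x \<bullet>c x = 1" using n unfolding x_def by (intro unit0_self) simp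
  obtain z where z: "z \<in> carrier_vec n" and zz: "z \<bullet>c z = 1" and xz: "x \<bullet>c z = 0"
    using orth_unit_exists[OF n x] by blast
  have zx: "z \<bullet>c x = 0" using cinner_sym[OF z x] xz by simp
  define r where "r = sqrt (1 - (cmod q)\<^sup>2)"
  have "(cmod q)\<^sup>2 \<le> 1" using q by (simp add: power_le_one)
  then have r2: "r * r = 1 - (cmod q)\<^sup>2" unfolding r_def by simp
  define y where "y = cnj q \<cdot>\<^sub>v x + complex_of_real r \<cdot>\<^sub>v z"
  have y: "y \<in> carrier_vec n" unfolding y_def using x z by simp
  have xy: "x \<bullet>c y = q"
    unfolding y_def using x z xx xz by (simp add: cinner_add_right[of _ n] cinner_smult_right[of _ n])
  have "y \<bullet>c y = cnj q * q * (x \<bullet>c x) + complex_of_real r * complex_of_real r * (z \<bullet>c z)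
      + cnj q * complex_of_real r * (x \<bullet>c z) + complex_of_real r * q * (z \<bullet>c x)"
    unfolding y_def using x z
    by (simp add: cinner_add_right[of _ n] cinner_add_left[of _ n] cinner_smult_right[of _ n] cinner_smult_left[of _ n] algebra_simps)
  also have "\<dots> = complex_of_real ((cmod q)\<^sup>2 + r * r)"
    using xx zz xz zx by (simp add: complex_norm_square[symmetric] mult.commute)
  also have "\<dots> = 1" using r2 by simp
  finally have yy: "y \<bullet>c y = 1" .
  have "cmod ((A *\<^sub>v x) \<bullet>c y) \<in> wset n q A"
    unfolding wset_def using x y xy xx yy vnorm1_iff[OF x] vnorm1_iff[OF y] by blast
  then show ?thesis by blast
qed

lemma diag_mult_vec:
  assumes a: "a \<in> carrier_vec n" and i: "i < n"
  shows "(real_diag_mat n d *\<^sub>v a) $ i = complex_of_real (d i) * a $ i"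
proof -
  have "(real_diag_mat n d *\<^sub>v a) $ i = (\<Sum>j<n. real_diag_mat n d $$ (i,j) * a $ j)"
    using a i by (intro mult_mat_vec_sum) auto
  also have "\<dots> = (\<Sum>j<n. if j = i then complex_of_real (d i) * a $ i else 0)"
    using i by (intro sum.cong refl) auto
  finally show ?thesis using i by simp
qed

lemma qform:
  assumes uU: "unitary_mat n U" and x: "x \<in> carrier_vec n" and y: "y \<in> carrier_vec n"
  shows "((U * real_diag_mat n d * mat_adjoint U) *\<^sub>v x) \<bullet>c y =
    (\<Sum>i<n. complex_of_real (d i) * (mat_adjoint U *\<^sub>v x) $ i * cnj ((mat_adjoint U *\<^sub>v y) $ i))"
proof -
  have U: "U \<in> carrier_mat n n" using uU unitary_carrier by auto
  have UH: "mat_adjoint U \<in> carrier_mat n n" using U by simp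
  have D: "real_diag_mat n d \<in> carrier_mat n n" by simp
  define a where "a = mat_adjoint U *\<^sub>v x"
  define b where "b = mat_adjoint U *\<^sub>v y"
  have a: "a \<in> carrier_vec n" and b: "b \<in> carrier_vec n" unfolding a_def b_def using UH x y by auto
  have "(U * real_diag_mat n d * mat_adjoint U) *\<^sub>v x = U *\<^sub>v (real_diag_mat n d *\<^sub>v a)"
    unfolding a_def assoc_mult_mat_vec[OF mult_carrier_mat[OF U D] UH x] assoc_mult_mat_vec[OF U D a[unfolded a_def]] ..
  then have "((U * real_diag_mat n d * mat_adjoint U) *\<^sub>v x) \<bullet>c y = (real_diag_mat n d *\<^sub>v a) \<bullet>c b"
    unfolding b_def using inner_adj[OF U _ y, of "real_diag_mat n d *\<^sub>v a"] D a by simp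
  also have "\<dots> = (\<Sum>i<n. complex_of_real (d i) * a $ i * cnj (b $ i))"
    unfolding cinner_sum[OF b] using diag_mult_vec[OF a] by simp
  finally show ?thesis unfolding a_def b_def .
qed

lemma unit_pres:
  assumes uU: "unitary_mat n U" and x: "x \<in> carrier_vec n"
  shows "(mat_adjoint U *\<^sub>v x) \<bullet>c (mat_adjoint U *\<^sub>v x) = x \<bullet>c x"
proof -
  have U: "U \<in> carrier_mat n n" using uU unitary_carrier by auto
  have UH: "mat_adjoint U \<in> carrier_mat n n" using U by simp
  have "(mat_adjoint U *\<^sub>v x) \<bullet>c (mat_adjoint U *\<^sub>v x) = x \<bullet>c (U *\<^sub>v (mat_adjoint U *\<^sub>v x))"
    using inner_adj[OF UH x, of "mat_adjoint U *\<^sub>v x"] UH x by simp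
  also have "U *\<^sub>v (mat_adjoint U *\<^sub>v x) = x"
    unfolding assoc_mult_mat_vec[OF U UH x, symmetric] unitary_mult_adj[OF uU] using x by simp
  finally show ?thesis .
qed

lemma adj_U_unit:
  assumes uU: "unitary_mat n U" and k: "k < n"
  shows "mat_adjoint U *\<^sub>v (U *\<^sub>v unit_vec n k) = unit_vec n k"
proof -
  have U: "U \<in> carrier_mat n n" using uU unitary_carrier by auto
  have UH: "mat_adjoint U \<in> carrier_mat n n" using U by simp
  have e: "unit_vec n k \<in> carrier_vec n" by simp
  show ?thesis
    unfolding assoc_mult_mat_vec[OF UH U e, symmetric] unitary_adj_mult[OF uU] by simp
qed

lemma qform_ev:
  assumes uU: "unitary_mat n U" and k: "k < n"
  shows "((U * real_diag_mat n d * mat_adjoint U) *\<^sub>v (U *\<^sub>v unit_vec n k)) \<bullet>c (U *\<^sub>v unit_vec n k) = complex_of_real (d k)"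
    and "(U *\<^sub>v unit_vec n k) \<bullet>c (U *\<^sub>v unit_vec n k) = 1"
    and "U *\<^sub>v unit_vec n k \<in> carrier_vec n"
proof -
  have U: "U \<in> carrier_mat n n" using uU unitary_carrier by auto
  show c: "U *\<^sub>v unit_vec n k \<in> carrier_vec n" using U by simp
  have "((U * real_diag_mat n d * mat_adjoint U) *\<^sub>v (U *\<^sub>v unit_vec n k)) \<bullet>c (U *\<^sub>v unit_vec n k)
    = (\<Sum>i<n. complex_of_real (d i) * unit_vec n k $ i * cnj (unit_vec n k $ i))"
    unfolding qform[OF uU c c] adj_U_unit[OF uU k] ..
  also have "\<dots> = (\<Sum>i<n. if i = k then complex_of_real (d k) else 0)"
    by (intro sum.cong refl) (auto simp: unit_vec_def)
  finally show "((U * real_diag_mat n d * mat_adjoint U) *\<^sub>v (U *\<^sub>v unit_vec n k)) \<bullet>c (U *\<^sub>v unit_vec n k) = complex_of_real (d k)"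
    using k by simp
  have "(U *\<^sub>v unit_vec n k) \<bullet>c (U *\<^sub>v unit_vec n k) = (mat_adjoint U *\<^sub>v (U *\<^sub>v unit_vec n k)) \<bullet>c (mat_adjoint U *\<^sub>v (U *\<^sub>v unit_vec n k))"
    using unit_pres[OF uU c] by simp
  also have "\<dots> = unit_vec n k \<bullet>c unit_vec n k" unfolding adj_U_unit[OF uU k] ..
  also have "\<dots> = (\<Sum>i<n. if i = k then 1 else 0)"
    by (subst cinner_sum[of _ n], simp, intro sum.cong refl) (auto simp: unit_vec_def)
  finally show "(U *\<^sub>v unit_vec n k) \<bullet>c (U *\<^sub>v unit_vec n k) = 1" using k by simp
qed

lemma qform_bound:
  assumes uU: "unitary_mat n U" and x: "x \<in> carrier_vec n" and y: "y \<in> carrier_vec n"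
    and xx: "x \<bullet>c x = 1" and yy: "y \<bullet>c y = 1"
    and M: "\<And>i. i < n \<Longrightarrow> \<bar>d i\<bar> \<le> M" and M0: "0 \<le> M"
  shows "cmod (((U * real_diag_mat n d * mat_adjoint U) *\<^sub>v x) \<bullet>c y) \<le> M"
proof -
  have U: "U \<in> carrier_mat n n" using uU unitary_carrier by auto
  have UH: "mat_adjoint U \<in> carrier_mat n n" using U by simp
  define a where "a = mat_adjoint U *\<^sub>v x"
  define b where "b = mat_adjoint U *\<^sub>v y"
  have a: "a \<in> carrier_vec n" and b: "b \<in> carrier_vec n" unfolding a_def b_def using UH x y by auto
  have sa: "(\<Sum>i<n. (cmod (a $ i))\<^sup>2) = 1"
    using cinner_self_Re[OF a] unit_pres[OF uU x] xx unfolding a_def by simp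
  have sb: "(\<Sum>i<n. (cmod (b $ i))\<^sup>2) = 1"
    using cinner_self_Re[OF b] unit_pres[OF uU y] yy unfolding b_def by simp
  have "cmod (((U * real_diag_mat n d * mat_adjoint U) *\<^sub>v x) \<bullet>c y)
      = cmod (\<Sum>i<n. complex_of_real (d i) * a $ i * cnj (b $ i))"
    unfolding qform[OF uU x y] a_def b_def ..
  also have "\<dots> \<le> (\<Sum>i<n. cmod (complex_of_real (d i) * a $ i * cnj (b $ i)))"
    by (rule norm_sum)
  also have "\<dots> \<le> (\<Sum>i<n. M * (((cmod (a $ i))\<^sup>2 + (cmod (b $ i))\<^sup>2) / 2))"
  proof (rule sum_mono)
    fix i assume "i \<in> {..<n}"
    then have di: "\<bar>d i\<bar> \<le> M" using M by simp
    have ab: "cmod (a $ i) * cmod (b $ i) \<le> ((cmod (a $ i))\<^sup>2 + (cmod (b $ i))\<^sup>2) / 2"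
      using sum_squares_bound[of "cmod (a $ i)" "cmod (b $ i)"] by (simp add: power2_eq_square)
    have "cmod (complex_of_real (d i) * a $ i * cnj (b $ i)) = \<bar>d i\<bar> * (cmod (a $ i) * cmod (b $ i))"
      by (simp add: norm_mult)
    also have "\<dots> \<le> M * (((cmod (a $ i))\<^sup>2 + (cmod (b $ i))\<^sup>2) / 2)"
      by (rule mult_mono[OF di ab M0]) (simp add: zero_le_mult_iff)
    finally show "cmod (complex_of_real (d i) * a $ i * cnj (b $ i)) \<le> M * (((cmod (a $ i))\<^sup>2 + (cmod (b $ i))\<^sup>2) / 2)" .
  qed
  also have "\<dots> = M * ((\<Sum>i<n. (cmod (a $ i))\<^sup>2) + (\<Sum>i<n. (cmod (b $ i))\<^sup>2)) / 2"
    by (simp add: sum_distrib_left[symmetric] sum.distrib sum_divide_distrib[symmetric])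
  also have "\<dots> = M" using sa sb by simp
  finally show ?thesis .
qed

lemma smult_mat_vec:
  assumes A: "A \<in> carrier_mat n m" and x: "x \<in> carrier_vec m"
  shows "(c \<cdot>\<^sub>m A) *\<^sub>v x = c \<cdot>\<^sub>v (A *\<^sub>v (x::complex vec))"
proof (rule eq_vecI)
  fix i assume "i < dim_vec (c \<cdot>\<^sub>v (A *\<^sub>v x))"
  then have i: "i < n" using A by simp
  have cA: "c \<cdot>\<^sub>m A \<in> carrier_mat n m" using A by simp
  show "((c \<cdot>\<^sub>m A) *\<^sub>v x) $ i = (c \<cdot>\<^sub>v (A *\<^sub>v x)) $ i"
    using A x i unfolding mult_mat_vec_sum[OF cA x i] 
    by (simp add: mult_mat_vec_sum[OF A x i] sum_distrib_left mult.assoc del: index_mult_mat_vec)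
qed (use A in simp)

lemma wq_upper:
  assumes n: "n \<ge> 2" and q: "cmod q \<le> 1" and uU: "unitary_mat n U"
    and M: "\<And>i. i < n \<Longrightarrow> \<bar>d i\<bar> \<le> M" and M0: "0 \<le> M"
  shows "wq n q (U * real_diag_mat n d * mat_adjoint U) \<le> M"
  unfolding wq_wset
proof (rule cSup_least[OF wset_nonempty[OF n q]])
  fix t assume "t \<in> wset n q (U * real_diag_mat n d * mat_adjoint U)"
  then obtain x y where x: "x \<in> carrier_vec n" and y: "y \<in> carrier_vec n" and xx: "vnorm x = 1"
    and yy: "vnorm y = 1" and t: "t = cmod (((U * real_diag_mat n d * mat_adjoint U) *\<^sub>v x) \<bullet>c y)"
    unfolding wset_def by blast
  show "t \<le> M" unfolding t
    by (rule qform_bound[OF uU x y _ _ M M0]) (use xx yy vnorm1_iff[OF x] vnorm1_iff[OF y] in auto)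
qed

lemma wset_bdd:
  assumes h: "hermitian_mat n H"
  shows "bdd_above (wset n q H)"
proof -
  obtain U d where uU: "unitary_mat n U" and H: "H = U * real_diag_mat n d * mat_adjoint U"
    using spectral[OF h] by blast
  define M where "M = (\<Sum>i<n. \<bar>d i\<bar>)"
  have M: "\<bar>d i\<bar> \<le> M" if "i < n" for i
    unfolding M_def using that by (intro member_le_sum) auto
  have M0: "0 \<le> M" unfolding M_def by (intro sum_nonneg) auto
  show ?thesis
  proof (rule bdd_aboveI)
    fix t assume "t \<in> wset n q H"
    then obtain x y where x: "x \<in> carrier_vec n" and y: "y \<in> carrier_vec n" and xx: "vnorm x = 1"
      and yy: "vnorm y = 1" and t: "t = cmod ((H *\<^sub>v x) \<bullet>c y)"
      unfolding wset_def by blast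
    show "t \<le> M" unfolding t H
      by (rule qform_bound[OF uU x y _ _ M M0]) (use xx yy vnorm1_iff[OF x] vnorm1_iff[OF y] in auto)
  qed
qed

lemma wq_elem:
  assumes bdd: "bdd_above (wset n q H)" and x: "x \<in> carrier_vec n" and y: "y \<in> carrier_vec n"
    and xx: "x \<bullet>c x = 1" and yy: "y \<bullet>c y = 1" and xy: "x \<bullet>c y = q"
  shows "cmod ((H *\<^sub>v x) \<bullet>c y) \<le> wq n q H"
  unfolding wq_wset
  by (rule cSup_upper[OF _ bdd]) (use x y xx yy xy vnorm1_iff[OF x] vnorm1_iff[OF y] in \<open>auto simp: wset_def\<close>)

lemma wq_nonneg:
  assumes n: "n \<ge> 2" and q: "cmod q \<le> 1" and bdd: "bdd_above (wset n q H)"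
  shows "0 \<le> wq n q H"
proof -
  obtain t where t: "t \<in> wset n q H" using wset_nonempty[OF n q] by blast
  have "t \<le> wq n q H" unfolding wq_wset by (rule cSup_upper[OF t bdd])
  moreover have "0 \<le> t" using t unfolding wset_def by auto
  ultimately show ?thesis by simp
qed

lemma wq_lower:
  assumes n: "n \<ge> 2" and q: "cmod q \<le> 1" and H: "H \<in> carrier_mat n n" and bdd: "bdd_above (wset n q H)"
    and x: "x \<in> carrier_vec n" and xx: "x \<bullet>c x = 1"
  shows "cmod q * cmod ((H *\<^sub>v x) \<bullet>c x) \<le> wq n q H"
proof -
  obtain z where z: "z \<in> carrier_vec n" and zz: "z \<bullet>c z = 1" and xz: "x \<bullet>c z = 0"
    using orth_unit_exists[OF n x] by blast
  have zx: "z \<bullet>c x = 0" using cinner_sym[OF z x] xz by simp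
  define r where "r = sqrt (1 - (cmod q)\<^sup>2)"
  have "(cmod q)\<^sup>2 \<le> 1" using q by (simp add: power_le_one)
  then have r2: "r * r = 1 - (cmod q)\<^sup>2" unfolding r_def by simp
  have Hx: "H *\<^sub>v x \<in> carrier_vec n" using H x by simp
  have key: "cmod (q * ((H *\<^sub>v x) \<bullet>c x) + complex_of_real c * ((H *\<^sub>v x) \<bullet>c z)) \<le> wq n q H"
    if c: "c * c = r * r" for c
  proof -
    define y where "y = cnj q \<cdot>\<^sub>v x + complex_of_real c \<cdot>\<^sub>v z"
    have y: "y \<in> carrier_vec n" unfolding y_def using x z by simp
    have xy: "x \<bullet>c y = q"
      unfolding y_def using x z xx xz by (simp add: cinner_add_right[of _ n] cinner_smult_right[of _ n])
    have "y \<bullet>c y = cnj q * q * (x \<bullet>c x) + complex_of_real c * complex_of_real c * (z \<bullet>c z)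
        + cnj q * complex_of_real c * (x \<bullet>c z) + complex_of_real c * q * (z \<bullet>c x)"
      unfolding y_def using x z
      by (simp add: cinner_add_right[of _ n] cinner_add_left[of _ n] cinner_smult_right[of _ n] cinner_smult_left[of _ n] algebra_simps)
    also have "\<dots> = complex_of_real ((cmod q)\<^sup>2 + c * c)"
      using xx zz xz zx by (simp add: complex_norm_square[symmetric] mult.commute)
    also have "\<dots> = 1" using r2 c by simp
    finally have yy: "y \<bullet>c y = 1" .
    have "(H *\<^sub>v x) \<bullet>c y = q * ((H *\<^sub>v x) \<bullet>c x) + complex_of_real c * ((H *\<^sub>v x) \<bullet>c z)"
      unfolding y_def using x z Hx by (simp add: cinner_add_right[of _ n] cinner_smult_right[of _ n])
    then show ?thesis using wq_elem[OF bdd x y xx yy xy] by simp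
  qed
  define a where "a = q * ((H *\<^sub>v x) \<bullet>c x)"
  define b where "b = complex_of_real r * ((H *\<^sub>v x) \<bullet>c z)"
  have k1: "cmod (a + b) \<le> wq n q H" using key[of r] unfolding a_def b_def by simp
  have k2: "cmod (a - b) \<le> wq n q H" using key[of "-r"] unfolding a_def b_def by simp
  have "2 * cmod a = cmod ((a + b) + (a - b))" by (simp add: norm_mult[symmetric])
  also have "\<dots> \<le> cmod (a + b) + cmod (a - b)" by (rule norm_triangle_ineq)
  finally have "cmod a \<le> wq n q H" using k1 k2 by simp
  then show ?thesis unfolding a_def by (simp add: norm_mult)
qed

lemma wq_subadd:
  assumes n: "n \<ge> 2" and q: "cmod q \<le> 1" and X: "hermitian_mat n X" and Y: "hermitian_mat n Y"
    and a: "0 \<le> \<alpha>" and b: "0 \<le> \<beta>"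
  shows "wq n q (complex_of_real \<alpha> \<cdot>\<^sub>m X + complex_of_real \<beta> \<cdot>\<^sub>m Y) \<le> \<alpha> * wq n q X + \<beta> * wq n q Y"
  unfolding wq_wset[of n q "complex_of_real \<alpha> \<cdot>\<^sub>m X + complex_of_real \<beta> \<cdot>\<^sub>m Y"]
proof (rule cSup_least[OF wset_nonempty[OF n q]])
  have Xc: "X \<in> carrier_mat n n" and Yc: "Y \<in> carrier_mat n n" using X Y hermitian_carrier by auto
  fix t assume "t \<in> wset n q (complex_of_real \<alpha> \<cdot>\<^sub>m X + complex_of_real \<beta> \<cdot>\<^sub>m Y)"
  then obtain x y where x: "x \<in> carrier_vec n" and y: "y \<in> carrier_vec n" and xx: "vnorm x = 1"
    and yy: "vnorm y = 1" and xy: "x \<bullet>c y = q"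
    and t: "t = cmod (((complex_of_real \<alpha> \<cdot>\<^sub>m X + complex_of_real \<beta> \<cdot>\<^sub>m Y) *\<^sub>v x) \<bullet>c y)"
    unfolding wset_def by blast
  have xx': "x \<bullet>c x = 1" and yy': "y \<bullet>c y = 1" using xx yy vnorm1_iff[OF x] vnorm1_iff[OF y] by auto
  have "((complex_of_real \<alpha> \<cdot>\<^sub>m X + complex_of_real \<beta> \<cdot>\<^sub>m Y) *\<^sub>v x) \<bullet>c y
      = complex_of_real \<alpha> * ((X *\<^sub>v x) \<bullet>c y) + complex_of_real \<beta> * ((Y *\<^sub>v x) \<bullet>c y)"
    using Xc Yc x y
    by (simp add: add_mult_distrib_mat_vec[of _ n n] smult_mat_vec[of _ n n] cinner_add_left[of _ n] cinner_smult_left[of _ n])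
  then have "t \<le> \<alpha> * cmod ((X *\<^sub>v x) \<bullet>c y) + \<beta> * cmod ((Y *\<^sub>v x) \<bullet>c y)"
    unfolding t using a b by (metis (no_types, lifting) abs_of_nonneg norm_mult norm_of_real norm_triangle_ineq)
  also have "\<dots> \<le> \<alpha> * wq n q X + \<beta> * wq n q Y"
    using wq_elem[OF wset_bdd[OF X] x y xx' yy' xy] wq_elem[OF wset_bdd[OF Y] x y xx' yy' xy] a b
    by (intro add_mono mult_left_mono) auto
  finally show "t \<le> \<alpha> * wq n q X + \<beta> * wq n q Y" .
qed

lemma adj_diag: "mat_adjoint (real_diag_mat n d) = real_diag_mat n d"
  by (rule eq_matI) auto

lemma herm_udu:
  assumes uU: "unitary_mat n U"
  shows "hermitian_mat n (U * real_diag_mat n d * mat_adjoint U)"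
proof -
  have U: "U \<in> carrier_mat n n" using uU unitary_carrier by auto
  have UH: "mat_adjoint U \<in> carrier_mat n n" using U by simp
  have D: "real_diag_mat n d \<in> carrier_mat n n" by simp
  have "mat_adjoint (U * real_diag_mat n d * mat_adjoint U) = mat_adjoint (mat_adjoint U) * mat_adjoint (U * real_diag_mat n d)"
    by (rule adj_mult[OF mult_carrier_mat[OF U D] UH])
  also have "\<dots> = U * (real_diag_mat n d * mat_adjoint U)"
    using adj_mult[OF U D] adj_diag by simp
  also have "\<dots> = U * real_diag_mat n d * mat_adjoint U"
    by (rule assoc_mult_mat[OF U D UH, symmetric])
  finally have h: "mat_adjoint (U * real_diag_mat n d * mat_adjoint U) = U * real_diag_mat n d * mat_adjoint U" .
  show ?thesis unfolding hermitian_mat_def using h mult_carrier_mat[OF mult_carrier_mat[OF U D] UH] by blast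
qed

lemma re_qform_udu:
  assumes uU: "unitary_mat n U" and x: "x \<in> carrier_vec n"
  shows "Re (((U * real_diag_mat n d * mat_adjoint U) *\<^sub>v x) \<bullet>c x) =
    (\<Sum>i<n. d i * (cmod ((mat_adjoint U *\<^sub>v x) $ i))\<^sup>2)"
  unfolding qform[OF uU x x] Re_sum
  by (intro sum.cong refl) (simp add: mult.assoc complex_norm_square[symmetric])

lemma posdef_udu:
  assumes uU: "unitary_mat n U" and d: "\<And>i. i < n \<Longrightarrow> d i > 0"
  shows "posdef_mat n (U * real_diag_mat n d * mat_adjoint U)"
  unfolding posdef_mat_def
proof (intro conjI herm_udu[OF uU] ballI impI)
  have U: "U \<in> carrier_mat n n" using uU unitary_carrier by auto
  fix x :: "complex vec" assume x: "x \<in> carrier_vec n" and x0: "x \<noteq> 0\<^sub>v n"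
  define a where "a = mat_adjoint U *\<^sub>v x"
  have a: "a \<in> carrier_vec n" unfolding a_def by (rule mult_mat_vec_carrier[OF adj_carrier[OF U] x])
  have "Re (a \<bullet>c a) \<noteq> 0"
  proof
    assume "Re (a \<bullet>c a) = 0"
    then have "Re (x \<bullet>c x) = 0" using unit_pres[OF uU x] unfolding a_def by simp
    then show False using cinner_self_zero[OF x] x0 by simp
  qed
  then obtain i where i: "i < n" and ai: "a $ i \<noteq> 0"
    using cinner_self_Re[OF a] by (metis (no_types, lifting) lessThan_iff norm_zero power_zero_numeral sum.neutral)
  show "0 < Re (((U * real_diag_mat n d * mat_adjoint U) *\<^sub>v x) \<bullet>c x)"
    unfolding re_qform_udu[OF uU x] a_def[symmetric]
  proof (rule sum_pos2[of _ i])
    show "0 \<le> d j * (cmod (a $ j))\<^sup>2" if "j \<in> {..<n}" for j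
      using d[of j] that by (simp add: less_imp_le)
  qed (use i ai d in auto)
qed

lemma psd_udu:
  assumes uU: "unitary_mat n U" and d: "\<And>i. i < n \<Longrightarrow> d i \<ge> 0"
  shows "possemidef_mat n (U * real_diag_mat n d * mat_adjoint U)"
  unfolding possemidef_mat_def
proof (intro conjI herm_udu[OF uU] ballI)
  fix x :: "complex vec" assume x: "x \<in> carrier_vec n"
  show "0 \<le> Re (((U * real_diag_mat n d * mat_adjoint U) *\<^sub>v x) \<bullet>c x)"
    unfolding re_qform_udu[OF uU x] using d by (intro sum_nonneg) auto
qed

lemma unitary_one: "unitary_mat n (1\<^sub>m n)"
  unfolding unitary_mat_def by simp

lemma diag_as_udu: "real_diag_mat n d = 1\<^sub>m n * real_diag_mat n d * mat_adjoint (1\<^sub>m n)"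
  by simp

lemma matfun_diag: "matfun n f (real_diag_mat n d) = real_diag_mat n (\<lambda>i. f (d i))"
  using matfun_eq[OF unitary_one diag_as_udu[of n d], of f] by simp

lemma psd_diag_entry:
  assumes P: "possemidef_mat n M" and k: "k < n"
  shows "0 \<le> Re (M $$ (k,k))"
proof -
  have M: "M \<in> carrier_mat n n" using P unfolding possemidef_mat_def hermitian_mat_def by simp
  have e: "unit_vec n k \<in> carrier_vec n" by simp
  have "0 \<le> Re ((M *\<^sub>v unit_vec n k) \<bullet>c unit_vec n k)" using P e unfolding possemidef_mat_def by blast
  also have "(M *\<^sub>v unit_vec n k) \<bullet>c unit_vec n k = M $$ (k,k)"
  proof -
    have "(M *\<^sub>v unit_vec n k) \<bullet>c unit_vec n k = (\<Sum>i<n. (M *\<^sub>v unit_vec n k) $ i * cnj (unit_vec n k $ i))"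
      by (rule cinner_sum) simp
    also have "\<dots> = (\<Sum>i<n. if i = k then (M *\<^sub>v unit_vec n k) $ k else 0)"
      by (intro sum.cong refl) (auto simp: unit_vec_def)
    also have "\<dots> = (M *\<^sub>v unit_vec n k) $ k" using k by simp
    also have "\<dots> = (\<Sum>j<n. M $$ (k,j) * unit_vec n k $ j)" by (rule mult_mat_vec_sum[OF M e k])
    also have "\<dots> = (\<Sum>j<n. if j = k then M $$ (k,k) else 0)"
      by (intro sum.cong refl) (auto simp: unit_vec_def)
    finally show ?thesis using k by simp
  qed
  finally show ?thesis .
qed

lemma diag_minus: "real_diag_mat n e - real_diag_mat n d = real_diag_mat n (\<lambda>i. e i - d i)"
  by (rule eq_matI) auto

lemma f_mono:
  assumes f: "f \<in> class_F" and a: "0 < a" and ab: "a \<le> b"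
  shows "f a \<le> f b"
proof -
  have om: "operator_monotone f" using f unfolding class_F_def by simp
  let ?A = "real_diag_mat 1 (\<lambda>_. a)" and ?B = "real_diag_mat 1 (\<lambda>_. b)"
  have pA: "posdef_mat 1 ?A" using posdef_udu[OF unitary_one, of 1 "\<lambda>_. a"] a by simp
  have pB: "posdef_mat 1 ?B" using posdef_udu[OF unitary_one, of 1 "\<lambda>_. b"] a ab by simp
  have "possemidef_mat 1 (?B - ?A)"
    unfolding diag_minus using psd_udu[OF unitary_one, of 1 "\<lambda>_. b - a"] ab by simp
  then have "loewner_le 1 ?A ?B" using pA pB unfolding loewner_le_def posdef_mat_def by simp
  then have "loewner_le 1 (matfun 1 f ?A) (matfun 1 f ?B)"
    using om pA pB unfolding operator_monotone_def by blast
  then have "possemidef_mat 1 (real_diag_mat 1 (\<lambda>_. f b) - real_diag_mat 1 (\<lambda>_. f a))"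
    unfolding loewner_le_def matfun_diag by simp
  then have "0 \<le> Re ((real_diag_mat 1 (\<lambda>_. f b - f a)) $$ (0,0))"
    unfolding diag_minus by (rule psd_diag_entry) simp
  then show ?thesis by simp
qed

lemma f_pos: "f \<in> class_F \<Longrightarrow> 0 < x \<Longrightarrow> 0 < f x"
  unfolding class_F_def operator_monotone_def by blast

lemma udu_index:
  assumes U: "U \<in> carrier_mat n n" and i: "i < n" and j: "j < n"
  shows "(U * real_diag_mat n d * mat_adjoint U) $$ (i,j) = (\<Sum>k<n. U $$ (i,k) * complex_of_real (d k) * cnj (U $$ (j,k)))"
proof -
  have D: "real_diag_mat n d \<in> carrier_mat n n" by simp
  have UD: "U * real_diag_mat n d \<in> carrier_mat n n" using U D by (rule mult_carrier_mat)
  have UH: "mat_adjoint U \<in> carrier_mat n n" using U by simp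
  show ?thesis
    unfolding mult_mat_sum[OF UD UH i j]
  proof (intro sum.cong refl)
    fix k assume "k \<in> {..<n}"
    then have k: "k < n" by simp
    show "(U * real_diag_mat n d) $$ (i,k) * mat_adjoint U $$ (k,j) = U $$ (i,k) * complex_of_real (d k) * cnj (U $$ (j,k))"
      using diag_right[OF U i k, of d] U j k by simp
  qed
qed

lemma sum2: "(\<Sum>k<2. f k) = f 0 + f (1::nat)"
  by (simp add: numeral_2_eq_2)

lemma less2: "(i::nat) < 2 \<Longrightarrow> i = 0 \<or> i = 1" by auto

lemma adj_minus:
  assumes "A \<in> carrier_mat n m" "B \<in> carrier_mat n m"
  shows "mat_adjoint (A - B) = mat_adjoint A - mat_adjoint (B::complex mat)"
  by (rule eq_matI) (use assms in auto)

lemma udu_carrier: "U \<in> carrier_mat n n \<Longrightarrow> U * real_diag_mat n d * mat_adjoint U \<in> carrier_mat n n"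
  by (rule mult_carrier_mat[OF mult_carrier_mat[OF _ real_diag_carrier] adj_carrier])

lemma real_quad:
  fixes \<alpha> c u v :: real
  assumes a: "\<alpha> > 0" and u: "u \<ge> 0" and v: "v \<ge> 0"
  shows "2 * \<bar>c\<bar> * u * v \<le> \<alpha> * u\<^sup>2 + (c\<^sup>2 / \<alpha> + 1) * v\<^sup>2"
proof -
  have "\<alpha> * (\<alpha> * u\<^sup>2 + (c\<^sup>2 / \<alpha> + 1) * v\<^sup>2 - 2 * \<bar>c\<bar> * u * v) = (\<alpha> * u - \<bar>c\<bar> * v)\<^sup>2 + \<alpha> * v\<^sup>2"
    using a by (simp add: field_simps power2_eq_square)
  also have "\<dots> \<ge> 0" using a by simp
  finally have "\<alpha> * (\<alpha> * u\<^sup>2 + (c\<^sup>2 / \<alpha> + 1) * v\<^sup>2 - 2 * \<bar>c\<bar> * u * v) \<ge> 0" .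
  then have "\<alpha> * u\<^sup>2 + (c\<^sup>2 / \<alpha> + 1) * v\<^sup>2 - 2 * \<bar>c\<bar> * u * v \<ge> 0"
    using a by (simp add: zero_le_mult_iff)
  then show ?thesis by simp
qed

lemma two_by_two:
  assumes f: "f \<in> class_F" and a: "0 < a" and b: "0 < b" and l0: "0 \<le> l" and l1: "l \<le> 1"
    and y: "l * a + (1 - l) * b < y"
  shows "l * f a + (1 - l) * f b \<le> f y"
proof -
  have om: "operator_monotone f" using f unfolding class_F_def by simp
  define p where "p = sqrt l"
  define r where "r = sqrt (1 - l)"
  have pp: "p * p = l" unfolding p_def using l0 by simp
  have rr: "r * r = 1 - l" unfolding r_def using l1 by simp
  have pp2: "p * (p * z) = l * z" for z using pp by (simp add: mult.assoc[symmetric])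
  have rr2: "r * (r * z) = (1 - l) * z" for z using rr by (simp add: mult.assoc[symmetric])
  define V :: "complex mat" where "V = mat 2 2 (\<lambda>(i,j). if i = j then complex_of_real p else if i = 0 then - complex_of_real r else complex_of_real r)"
  have V: "V \<in> carrier_mat 2 2" unfolding V_def by simp
  have V00: "V $$ (0,0) = complex_of_real p" and V01: "V $$ (0,1) = - complex_of_real r"
    and V10: "V $$ (1,0) = complex_of_real r" and V11: "V $$ (1,1) = complex_of_real p"
    unfolding V_def by simp_all
  have uV: "unitary_mat 2 V" unfolding unitary_mat_def
  proof (intro conjI V eq_matI)
    fix i j assume "i < dim_row (1\<^sub>m 2 :: complex mat)" "j < dim_col (1\<^sub>m 2 :: complex mat)"
    then have i: "i < 2" and j: "j < 2" by auto
    have VH: "mat_adjoint V \<in> carrier_mat 2 2" using V by simp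
    have e: "(V * mat_adjoint V) $$ (i,j) = (\<Sum>k<2. V $$ (i,k) * cnj (V $$ (j,k)))"
      unfolding mult_mat_sum[OF V VH i j] using V j by (intro sum.cong refl) simp
    have s: "complex_of_real p * complex_of_real p + complex_of_real r * complex_of_real r = 1"
      using pp rr by (simp flip: of_real_mult of_real_add)
    show "(V * mat_adjoint V) $$ (i,j) = 1\<^sub>m 2 $$ (i,j)"
      unfolding e sum2 using less2[OF i] less2[OF j] s s[unfolded add.commute[of "complex_of_real p * complex_of_real p"]] V00 V01 V10 V11
      by (auto simp: mult.commute)
  qed (use V in simp_all)
  define t where "t = (\<lambda>k::nat. if k = 0 then a else b)"
  define M where "M = V * real_diag_mat 2 t * mat_adjoint V"
  have M: "M \<in> carrier_mat 2 2" unfolding M_def using V by (rule udu_carrier)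
  define m where "m = l * a + (1 - l) * b"
  define c where "c = p * r * (a - b)"
  define \<beta>0 where "\<beta>0 = r * r * a + p * p * b"
  have Mij: "M $$ (i,j) = (\<Sum>k<2. V $$ (i,k) * complex_of_real (t k) * cnj (V $$ (j,k)))" if "i < 2" "j < 2" for i j
    unfolding M_def by (rule udu_index[OF V that])
  have M00: "M $$ (0,0) = complex_of_real m"
  proof -
    have "M $$ (0,0) = (\<Sum>k<2. V $$ (0,k) * complex_of_real (t k) * cnj (V $$ (0,k)))" by (rule Mij) simp_all
    also have "\<dots> = complex_of_real m"
      unfolding sum2 V00 V01 V10 V11 m_def t_def
      by (simp flip: of_real_mult of_real_add of_real_minus add: algebra_simps pp rr)
    finally show ?thesis .
  qed
  have M01: "M $$ (0,1) = complex_of_real c"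
  proof -
    have "M $$ (0,1) = (\<Sum>k<2. V $$ (0,k) * complex_of_real (t k) * cnj (V $$ (1,k)))" by (rule Mij) simp_all
    also have "\<dots> = complex_of_real c"
      unfolding sum2 V00 V01 V10 V11 c_def t_def
      by (simp flip: of_real_mult of_real_add of_real_minus add: algebra_simps pp rr)
    finally show ?thesis .
  qed
  have M10: "M $$ (1,0) = complex_of_real c"
  proof -
    have "M $$ (1,0) = (\<Sum>k<2. V $$ (1,k) * complex_of_real (t k) * cnj (V $$ (0,k)))" by (rule Mij) simp_all
    also have "\<dots> = complex_of_real c"
      unfolding sum2 V00 V01 V10 V11 c_def t_def
      by (simp flip: of_real_mult of_real_add of_real_minus add: algebra_simps pp rr)
    finally show ?thesis .
  qed
  have M11: "M $$ (1,1) = complex_of_real \<beta>0"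
  proof -
    have "M $$ (1,1) = (\<Sum>k<2. V $$ (1,k) * complex_of_real (t k) * cnj (V $$ (1,k)))" by (rule Mij) simp_all
    also have "\<dots> = complex_of_real \<beta>0"
      unfolding sum2 V00 V01 V10 V11 \<beta>0_def t_def
      by (simp flip: of_real_mult of_real_add of_real_minus add: algebra_simps pp rr)
    finally show ?thesis .
  qed
  have m0: "0 < m"
  proof -
    have "0 \<le> l * a" "0 \<le> (1 - l) * b" using l0 l1 a b by simp_all
    moreover have "0 < l * a \<or> 0 < (1 - l) * b" using l0 l1 a b
      by (cases "l = 0") (auto simp: mult_pos_pos)
    ultimately show ?thesis unfolding m_def by linarith
  qed
  define \<alpha> where "\<alpha> = y - m"
  have \<alpha>: "0 < \<alpha>" unfolding \<alpha>_def m_def using y by simp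
  have b0: "0 \<le> \<beta>0" unfolding \<beta>0_def using a b by (simp add: pp rr l0 l1)
  define \<mu> where "\<mu> = \<beta>0 + (c\<^sup>2 / \<alpha> + 1)"
  have \<mu>: "0 < \<mu>" unfolding \<mu>_def using b0 \<alpha> by (simp add: add_nonneg_pos)
  define g where "g = (\<lambda>k::nat. if k = 0 then y else \<mu>)"
  define G where "G = real_diag_mat 2 g"
  have G: "G \<in> carrier_mat 2 2" unfolding G_def by simp
  have pM: "posdef_mat 2 M" unfolding M_def by (rule posdef_udu[OF uV]) (use a b in \<open>auto simp: t_def\<close>)
  have pG: "posdef_mat 2 G" unfolding G_def using posdef_udu[OF unitary_one, of 2 g] \<mu> \<alpha> m0 \<alpha>_def
    by (auto simp: g_def)
  have hM: "hermitian_mat 2 M" and hG: "hermitian_mat 2 G" using pM pG unfolding posdef_mat_def by auto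
  have psd: "possemidef_mat 2 (G - M)"
    unfolding possemidef_mat_def hermitian_mat_def
  proof (intro conjI ballI)
    show GM: "G - M \<in> carrier_mat 2 2" using M by (rule minus_carrier_mat)
    show "mat_adjoint (G - M) = G - M"
      using adj_minus[OF G M] hM hG unfolding hermitian_mat_def by simp
    fix x :: "complex vec" assume x: "x \<in> carrier_vec 2"
    define N where "N = G - M"
    have N: "N \<in> carrier_mat 2 2" unfolding N_def using M by (rule minus_carrier_mat)
    have N00: "N $$ (0,0) = complex_of_real \<alpha>" unfolding N_def \<alpha>_def G_def g_def using G M M00 by simp
    have N01: "N $$ (0,1) = - complex_of_real c" unfolding N_def G_def g_def using G M M01 by simp
    have N10: "N $$ (1,0) = - complex_of_real c" unfolding N_def G_def g_def using G M M10 by simp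
    have N11: "N $$ (1,1) = complex_of_real (c\<^sup>2 / \<alpha> + 1)" unfolding N_def G_def g_def \<mu>_def using G M M11 by simp
    have "(N *\<^sub>v x) \<bullet>c x = (\<Sum>i<2. (\<Sum>j<2. N $$ (i,j) * x $ j) * cnj (x $ i))"
      unfolding cinner_sum[OF x] using N x by (intro sum.cong refl) (simp add: mult_mat_vec_sum[OF N x] del: index_mult_mat_vec)
    also have "\<dots> = complex_of_real \<alpha> * (x $ 0 * cnj (x $ 0)) + complex_of_real (c\<^sup>2 / \<alpha> + 1) * (x $ 1 * cnj (x $ 1))
        - complex_of_real c * (x $ 1 * cnj (x $ 0) + x $ 0 * cnj (x $ 1))"
      unfolding sum2 N00 N01 N10 N11 by (simp add: algebra_simps)
    finally have e: "Re ((N *\<^sub>v x) \<bullet>c x) = \<alpha> * (cmod (x $ 0))\<^sup>2 + (c\<^sup>2 / \<alpha> + 1) * (cmod (x $ 1))\<^sup>2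
        - c * (2 * Re (x $ 0 * cnj (x $ 1)))"
      by (simp add: complex_norm_square[symmetric] cnj_add_mult_eq_Re[symmetric] mult.commute)
    have "c * (2 * Re (x $ 0 * cnj (x $ 1))) \<le> 2 * \<bar>c\<bar> * cmod (x $ 0) * cmod (x $ 1)"
    proof -
      have "\<bar>Re (x $ 0 * cnj (x $ 1))\<bar> \<le> cmod (x $ 0) * cmod (x $ 1)"
        using abs_Re_le_cmod[of "x $ 0 * cnj (x $ 1)"] by (simp add: norm_mult)
      then have "\<bar>c\<bar> * \<bar>Re (x $ 0 * cnj (x $ 1))\<bar> \<le> \<bar>c\<bar> * (cmod (x $ 0) * cmod (x $ 1))"
        by (rule mult_left_mono) simp
      moreover have "c * Re (x $ 0 * cnj (x $ 1)) \<le> \<bar>c\<bar> * \<bar>Re (x $ 0 * cnj (x $ 1))\<bar>"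
        by (simp add: abs_mult[symmetric])
      ultimately have "c * Re (x $ 0 * cnj (x $ 1)) \<le> \<bar>c\<bar> * (cmod (x $ 0) * cmod (x $ 1))" by linarith
      then have "2 * (c * Re (x $ 0 * cnj (x $ 1))) \<le> 2 * (\<bar>c\<bar> * (cmod (x $ 0) * cmod (x $ 1)))" by simp
      then show ?thesis by (simp only: mult_ac)
    qed
    also have "\<dots> \<le> \<alpha> * (cmod (x $ 0))\<^sup>2 + (c\<^sup>2 / \<alpha> + 1) * (cmod (x $ 1))\<^sup>2"
      by (rule real_quad[OF \<alpha>]) simp_all
    finally show "0 \<le> Re (((G - M) *\<^sub>v x) \<bullet>c x)" using e unfolding N_def by simp
  qed
  have "loewner_le 2 M G" unfolding loewner_le_def using hM hG psd by simp
  then have "loewner_le 2 (matfun 2 f M) (matfun 2 f G)"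
    using om pM pG unfolding operator_monotone_def by blast
  moreover have "matfun 2 f M = V * real_diag_mat 2 (\<lambda>k. f (t k)) * mat_adjoint V"
    unfolding M_def by (rule matfun_eq[OF uV refl])
  moreover have "matfun 2 f G = real_diag_mat 2 (\<lambda>k. f (g k))" unfolding G_def by (rule matfun_diag)
  ultimately have P: "possemidef_mat 2 (real_diag_mat 2 (\<lambda>k. f (g k)) - V * real_diag_mat 2 (\<lambda>k. f (t k)) * mat_adjoint V)"
    unfolding loewner_le_def by simp
  have FM: "V * real_diag_mat 2 (\<lambda>k. f (t k)) * mat_adjoint V \<in> carrier_mat 2 2" using V by (rule udu_carrier)
  have ent: "(V * real_diag_mat 2 (\<lambda>k. f (t k)) * mat_adjoint V) $$ (0,0) = complex_of_real (l * f a + (1 - l) * f b)"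
  proof -
    have "(V * real_diag_mat 2 (\<lambda>k. f (t k)) * mat_adjoint V) $$ (0,0) = (\<Sum>k<2. V $$ (0,k) * complex_of_real (f (t k)) * cnj (V $$ (0,k)))"
      by (rule udu_index[OF V]) simp_all
    also have "\<dots> = complex_of_real (l * f a + (1 - l) * f b)"
      unfolding sum2 V00 V01 t_def
      by (simp flip: of_real_mult of_real_add of_real_minus add: pp rr mult.assoc pp2 rr2 mult.commute[of "f a"] mult.commute[of "f b"])
    finally show ?thesis .
  qed
  have "0 \<le> Re ((real_diag_mat 2 (\<lambda>k. f (g k)) - V * real_diag_mat 2 (\<lambda>k. f (t k)) * mat_adjoint V) $$ (0,0))"
    by (rule psd_diag_entry[OF P]) simp
  also have "(real_diag_mat 2 (\<lambda>k. f (g k)) - V * real_diag_mat 2 (\<lambda>k. f (t k)) * mat_adjoint V) $$ (0,0)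
     = real_diag_mat 2 (\<lambda>k. f (g k)) $$ (0,0) - (V * real_diag_mat 2 (\<lambda>k. f (t k)) * mat_adjoint V) $$ (0,0)"
    using FM by (intro index_minus_mat) auto
  finally show ?thesis unfolding ent by (simp add: g_def)
qed

lemma f_right_bound:
  assumes f: "f \<in> class_F" and x: "0 < x" and k0: "0 < \<kappa>" and k1: "\<kappa> < 1"
  shows "\<exists>b > x. \<kappa> * f b \<le> f x"
proof -
  define b where "b = x * (3 * \<kappa> + 1) / (4 * \<kappa>)"
  have bx: "b > x" unfolding b_def using x k0 k1 by (simp add: field_simps)
  have b0: "0 < b" using bx x by simp
  have comb: "(1 - \<kappa>) * (x / 2) + (1 - (1 - \<kappa>)) * b < x"
  proof -
    have "(1 - \<kappa>) * (x / 2) + (1 - (1 - \<kappa>)) * b = x * (3 + \<kappa>) / 4"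
      unfolding b_def using k0 by (simp add: field_simps)
    also have "\<dots> < x" using x k1 by (simp add: field_simps)
    finally show ?thesis .
  qed
  have "(1 - \<kappa>) * f (x / 2) + (1 - (1 - \<kappa>)) * f b \<le> f x"
    by (rule two_by_two[OF f _ b0 _ _ comb]) (use x k0 k1 in auto)
  moreover have "0 \<le> (1 - \<kappa>) * f (x / 2)" using f_pos[OF f, of "x/2"] x k1 by simp
  ultimately have "\<kappa> * f b \<le> f x" by simp
  then show ?thesis using bx by blast
qed

lemma f_concave:
  assumes f: "f \<in> class_F" and a: "0 < a" and b: "0 < b" and l0: "0 \<le> l" and l1: "l \<le> 1"
  shows "l * f a + (1 - l) * f b \<le> f (l * a + (1 - l) * b)"
proof (rule ccontr)
  define m where "m = l * a + (1 - l) * b"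
  define mix where "mix = l * f a + (1 - l) * f b"
  assume "\<not> mix \<le> f m"
  then have lt: "f m < mix" unfolding mix_def m_def by simp
  have m0: "0 < m"
  proof -
    have "0 \<le> l * a" "0 \<le> (1 - l) * b" using l0 l1 a b by simp_all
    moreover have "0 < l * a \<or> 0 < (1 - l) * b" using l0 l1 a b
      by (cases "l = 0") (auto simp: mult_pos_pos)
    ultimately show ?thesis unfolding m_def by linarith
  qed
  have fm: "0 < f m" using f_pos[OF f m0] .
  have mix0: "0 < mix" using fm lt by simp
  define \<kappa> where "\<kappa> = (f m / mix + 1) / 2"
  have k0: "0 < \<kappa>" unfolding \<kappa>_def using fm mix0 by (simp add: add_pos_pos)
  have k1: "\<kappa> < 1" unfolding \<kappa>_def using lt mix0 by (simp add: field_simps)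
  obtain b' where b': "b' > m" and kb: "\<kappa> * f b' \<le> f m" using f_right_bound[OF f m0 k0 k1] by blast
  have "mix \<le> f b'" unfolding mix_def
    by (rule two_by_two[OF f a b l0 l1]) (use b' in \<open>simp add: m_def\<close>)
  then have "\<kappa> * mix \<le> f m" using kb k0 by (meson mult_left_mono less_imp_le order_trans)
  then have "(f m + mix) / 2 \<le> f m" unfolding \<kappa>_def using mix0 by (simp add: field_simps)
  then show False using lt by simp
qed

lemma f_scale:
  assumes f: "f \<in> class_F" and y: "0 < y" and s0: "0 < s" and s1: "s \<le> 1"
  shows "s * f y \<le> f (s * y)"
proof (cases "s = 1")
  case True
  then show ?thesis by simp
next
  case False
  then have s1': "s < 1" using s1 by simp
  show ?thesis
  proof (rule ccontr)
    assume "\<not> s * f y \<le> f (s * y)"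
    then have lt: "f (s * y) < s * f y" by simp
    have fy: "0 < f y" using f_pos[OF f y] .
    have fsy: "0 < f (s * y)" using f_pos[OF f] s0 y by simp
    define \<kappa> where "\<kappa> = (f (s * y) / f y + s) / 2"
    have ks: "\<kappa> < s" unfolding \<kappa>_def using lt fy by (simp add: field_simps)
    have kg: "f (s * y) / f y < \<kappa>" unfolding \<kappa>_def using lt fy by (simp add: field_simps)
    have k0: "0 < \<kappa>" using kg fsy fy by (smt (verit) divide_pos_pos)
    have k1: "\<kappa> < 1" using ks s1 by simp
    define a where "a = (s - \<kappa>) * y / (2 * (1 - \<kappa>))"
    have a0: "0 < a" unfolding a_def using ks k1 y by simp
    have comb: "(1 - \<kappa>) * a + (1 - (1 - \<kappa>)) * y < s * y"
    proof -
      have "(1 - \<kappa>) * a + (1 - (1 - \<kappa>)) * y = (s - \<kappa>) * y / 2 + \<kappa> * y"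
        unfolding a_def using k1 by (simp add: field_simps)
      also have "\<dots> < s * y" using ks y by (simp add: field_simps)
      finally show ?thesis .
    qed
    have "(1 - \<kappa>) * f a + (1 - (1 - \<kappa>)) * f y \<le> f (s * y)"
      by (rule two_by_two[OF f a0 y _ _ comb]) (use k0 k1 in auto)
    moreover have "0 \<le> (1 - \<kappa>) * f a" using f_pos[OF f a0] k1 by simp
    ultimately have "\<kappa> * f y \<le> f (s * y)" by simp
    then have "\<kappa> \<le> f (s * y) / f y" using fy by (simp add: field_simps)
    then show False using kg by simp
  qed
qed

lemma ex_argmax:
  fixes g :: "nat \<Rightarrow> real"
  assumes "0 < n"
  shows "\<exists>k<n. \<forall>i<n. g i \<le> g k"
  using assms
proof (induction n)
  case 0 then show ?case by simp
next
  case (Suc m)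
  show ?case
  proof (cases "m = 0")
    case True then show ?thesis by auto
  next
    case False
    then obtain k where k: "k < m" and kk: "\<forall>i<m. g i \<le> g k" using Suc.IH by auto
    show ?thesis
    proof (cases "g m \<le> g k")
      case True
      then show ?thesis using k kk by (intro exI[of _ k]) (auto simp: less_Suc_eq)
    next
      case False
      then show ?thesis using kk by (intro exI[of _ m]) (auto simp: less_Suc_eq)
    qed
  qed
qed

lemma adj_plus:
  assumes "A \<in> carrier_mat n m" "B \<in> carrier_mat n m"
  shows "mat_adjoint (A + B) = mat_adjoint A + mat_adjoint (B::complex mat)"
  by (rule eq_matI) (use assms in auto)

lemma herm_plus:
  assumes "hermitian_mat n A" "hermitian_mat n B"
  shows "hermitian_mat n (A + B)"
  using assms adj_plus[of A n n B] unfolding hermitian_mat_def by auto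

lemma posdef_ev:
  assumes p: "posdef_mat n H" and uU: "unitary_mat n U" and H: "H = U * real_diag_mat n d * mat_adjoint U"
    and k: "k < n"
  shows "0 < d k"
proof -
  have x: "U *\<^sub>v unit_vec n k \<in> carrier_vec n" and xx: "(U *\<^sub>v unit_vec n k) \<bullet>c (U *\<^sub>v unit_vec n k) = 1"
    using qform_ev[OF uU k] by auto
  have "U *\<^sub>v unit_vec n k \<noteq> 0\<^sub>v n"
  proof
    assume "U *\<^sub>v unit_vec n k = 0\<^sub>v n"
    then have "(U *\<^sub>v unit_vec n k) \<bullet>c (U *\<^sub>v unit_vec n k) = 0" by simp
    then show False using xx by simp
  qed
  then have "0 < Re ((H *\<^sub>v (U *\<^sub>v unit_vec n k)) \<bullet>c (U *\<^sub>v unit_vec n k))"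
    using p x unfolding posdef_mat_def by blast
  then show ?thesis unfolding H qform_ev(1)[OF uU k] by simp
qed

lemma wq_ev_lower:
  assumes n: "n \<ge> 2" and q: "cmod q \<le> 1" and uU: "unitary_mat n U" and k: "k < n"
  shows "cmod q * \<bar>d k\<bar> \<le> wq n q (U * real_diag_mat n d * mat_adjoint U)"
proof -
  have U: "U \<in> carrier_mat n n" using uU unitary_carrier by auto
  have "cmod q * cmod (((U * real_diag_mat n d * mat_adjoint U) *\<^sub>v (U *\<^sub>v unit_vec n k)) \<bullet>c (U *\<^sub>v unit_vec n k))
     \<le> wq n q (U * real_diag_mat n d * mat_adjoint U)"
    by (rule wq_lower[OF n q udu_carrier[OF U] wset_bdd[OF herm_udu[OF uU]] qform_ev(3)[OF uU k] qform_ev(2)[OF uU k]])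
  then show ?thesis unfolding qform_ev(1)[OF uU k] by simp
qed

lemma powr_key:
  fixes u L t :: real
  assumes u: "0 < u" and uL: "u powr t \<le> L" and t0: "0 < t" and t1: "t < 1"
  shows "u \<le> L powr ((1 - t) / t) * u powr t"
proof -
  have L0: "0 < L" using uL u by (smt (verit) powr_gt_zero)
  have "u powr (1 - t) = (u powr t) powr ((1 - t) / t)"
    using u t0 by (simp add: powr_powr)
  also have "\<dots> \<le> L powr ((1 - t) / t)"
    by (rule powr_mono2) (use t0 t1 uL u in auto)
  finally have "u powr (1 - t) \<le> L powr ((1 - t) / t)" .
  then have "u powr (1 - t) * u powr t \<le> L powr ((1 - t) / t) * u powr t"
    by (rule mult_right_mono) simp
  moreover have "u powr (1 - t) * u powr t = u" using u by (simp add: powr_add[symmetric])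
  ultimately show ?thesis by simp
qed

lemma part_c:
  fixes n :: nat and A B :: "complex mat" and q :: complex and t :: real
  assumes n: "n \<ge> 2" and pA: "posdef_mat n A" and pB: "posdef_mat n B"
    and q0: "0 < cmod q" and q1: "cmod q \<le> 1" and t0: "0 < t" and t1: "t < 1"
  shows "cmod q * wq n q (matfun n (\<lambda>x. x powr t) (A + B))
         \<le> wq n q (matfun n (\<lambda>x. x powr t) A + matfun n (\<lambda>x. x powr t) B)"
proof -
  define s where "s = cmod q"
  have s0: "0 < s" using q0 unfolding s_def .
  have hA: "hermitian_mat n A" and hB: "hermitian_mat n B" using pA pB unfolding posdef_mat_def by auto
  have Ac: "A \<in> carrier_mat n n" and Bc: "B \<in> carrier_mat n n" using hA hB hermitian_carrier by auto
  obtain U a where uU: "unitary_mat n U" and Aeq: "A = U * real_diag_mat n a * mat_adjoint U"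
    using spectral[OF hA] by blast
  obtain W b where uW: "unitary_mat n W" and Beq: "B = W * real_diag_mat n b * mat_adjoint W"
    using spectral[OF hB] by blast
  have apos: "0 < a i" if "i < n" for i using posdef_ev[OF pA uU Aeq that] .
  have bpos: "0 < b i" if "i < n" for i using posdef_ev[OF pB uW Beq that] .
  have Uc: "U \<in> carrier_mat n n" and Wc: "W \<in> carrier_mat n n" using uU uW unitary_carrier by auto
  define P where "P = matfun n (\<lambda>x. x powr t) A"
  define Q where "Q = matfun n (\<lambda>x. x powr t) B"
  have Peq: "P = U * real_diag_mat n (\<lambda>i. a i powr t) * mat_adjoint U" unfolding P_def by (rule matfun_eq[OF uU Aeq])
  have Qeq: "Q = W * real_diag_mat n (\<lambda>i. b i powr t) * mat_adjoint W" unfolding Q_def by (rule matfun_eq[OF uW Beq])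
  have Pc: "P \<in> carrier_mat n n" unfolding Peq by (rule udu_carrier[OF Uc])
  have Qc: "Q \<in> carrier_mat n n" unfolding Qeq by (rule udu_carrier[OF Wc])
  have hPQ: "hermitian_mat n (P + Q)" unfolding Peq Qeq by (intro herm_plus herm_udu uU uW)
  have PQc: "P + Q \<in> carrier_mat n n" using hPQ hermitian_carrier by auto
  have hAB: "hermitian_mat n (A + B)" by (rule herm_plus[OF hA hB])
  have pAB: "posdef_mat n (A + B)"
    unfolding posdef_mat_def
  proof (intro conjI hAB ballI impI)
    fix x :: "complex vec" assume x: "x \<in> carrier_vec n" and x0: "x \<noteq> 0\<^sub>v n"
    have "((A + B) *\<^sub>v x) \<bullet>c x = (A *\<^sub>v x) \<bullet>c x + (B *\<^sub>v x) \<bullet>c x"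
      using Ac Bc x by (simp add: add_mult_distrib_mat_vec[OF Ac Bc x] cinner_add_left[of _ n])
    moreover have "0 < Re ((A *\<^sub>v x) \<bullet>c x)" "0 < Re ((B *\<^sub>v x) \<bullet>c x)"
      using pA pB x x0 unfolding posdef_mat_def by auto
    ultimately show "0 < Re (((A + B) *\<^sub>v x) \<bullet>c x)" by simp
  qed
  obtain V e where uV: "unitary_mat n V" and ABeq: "A + B = V * real_diag_mat n e * mat_adjoint V"
    using spectral[OF hAB] by blast
  have epos: "0 < e i" if "i < n" for i using posdef_ev[OF pAB uV ABeq that] .
  obtain ke where ke: "ke < n" and kmax: "\<forall>i<n. e i \<le> e ke" using ex_argmax[of n e] n by auto
  define em where "em = e ke"
  have em0: "0 < em" unfolding em_def using epos ke by simp
  define L where "L = wq n q (P + Q) / s"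
  have PQz: "((P + Q) *\<^sub>v z) \<bullet>c z = (P *\<^sub>v z) \<bullet>c z + (Q *\<^sub>v z) \<bullet>c z" if z: "z \<in> carrier_vec n" for z
    using Pc Qc z by (simp add: add_mult_distrib_mat_vec[OF Pc Qc z] cinner_add_left[of _ n])
  have key: "Re ((P *\<^sub>v z) \<bullet>c z) + Re ((Q *\<^sub>v z) \<bullet>c z) \<le> L"
    if z: "z \<in> carrier_vec n" and zz: "z \<bullet>c z = 1" for z
  proof -
    have "s * cmod (((P + Q) *\<^sub>v z) \<bullet>c z) \<le> wq n q (P + Q)"
      unfolding s_def by (rule wq_lower[OF n q1 PQc wset_bdd[OF hPQ] z zz])
    moreover have "Re (((P + Q) *\<^sub>v z) \<bullet>c z) \<le> cmod (((P + Q) *\<^sub>v z) \<bullet>c z)" by (rule complex_Re_le_cmod)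
    ultimately have "s * Re (((P + Q) *\<^sub>v z) \<bullet>c z) \<le> wq n q (P + Q)"
      using s0 by (meson mult_left_mono less_imp_le order_trans)
    then show ?thesis unfolding L_def PQz[OF z] using s0 by (simp add: field_simps)
  qed
  have Pnn: "0 \<le> Re ((P *\<^sub>v z) \<bullet>c z)" if z: "z \<in> carrier_vec n" for z
    unfolding Peq re_qform_udu[OF uU z] using apos by (intro sum_nonneg) simp
  have Qnn: "0 \<le> Re ((Q *\<^sub>v z) \<bullet>c z)" if z: "z \<in> carrier_vec n" for z
    unfolding Qeq re_qform_udu[OF uW z] using bpos by (intro sum_nonneg) simp
  have aL: "a i powr t \<le> L" if i: "i < n" for i
  proof -
    have "Re ((P *\<^sub>v (U *\<^sub>v unit_vec n i)) \<bullet>c (U *\<^sub>v unit_vec n i)) = a i powr t"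
      unfolding Peq qform_ev(1)[OF uU i] by simp
    then show ?thesis using key[OF qform_ev(3)[OF uU i] qform_ev(2)[OF uU i]] Qnn[OF qform_ev(3)[OF uU i]] by simp
  qed
  have bL: "b i powr t \<le> L" if i: "i < n" for i
  proof -
    have "Re ((Q *\<^sub>v (W *\<^sub>v unit_vec n i)) \<bullet>c (W *\<^sub>v unit_vec n i)) = b i powr t"
      unfolding Qeq qform_ev(1)[OF uW i] by simp
    then show ?thesis using key[OF qform_ev(3)[OF uW i] qform_ev(2)[OF uW i]] Pnn[OF qform_ev(3)[OF uW i]] by simp
  qed
  have L0: "0 < L"
  proof -
    have "0 < n" using n by simp
    then have "0 < a 0 powr t" "a 0 powr t \<le> L" using aL[of 0] apos[of 0] by auto
    then show ?thesis by linarith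
  qed
  define K where "K = L powr ((1 - t) / t)"
  have K0: "0 \<le> K" unfolding K_def by simp
  have Aineq: "Re ((A *\<^sub>v z) \<bullet>c z) \<le> K * Re ((P *\<^sub>v z) \<bullet>c z)" if z: "z \<in> carrier_vec n" for z
  proof -
    have "Re ((A *\<^sub>v z) \<bullet>c z) = (\<Sum>i<n. a i * (cmod ((mat_adjoint U *\<^sub>v z) $ i))\<^sup>2)"
      unfolding Aeq by (rule re_qform_udu[OF uU z])
    also have "\<dots> \<le> (\<Sum>i<n. K * (a i powr t * (cmod ((mat_adjoint U *\<^sub>v z) $ i))\<^sup>2))"
    proof (rule sum_mono)
      fix i assume "i \<in> {..<n}"
      then have i: "i < n" by simp
      have "a i \<le> K * a i powr t" unfolding K_def by (rule powr_key[OF apos[OF i] aL[OF i] t0 t1])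
      then show "a i * (cmod ((mat_adjoint U *\<^sub>v z) $ i))\<^sup>2 \<le> K * (a i powr t * (cmod ((mat_adjoint U *\<^sub>v z) $ i))\<^sup>2)"
        by (metis mult.assoc mult_right_mono zero_le_power2)
    qed
    also have "\<dots> = K * Re ((P *\<^sub>v z) \<bullet>c z)"
      unfolding Peq re_qform_udu[OF uU z] by (simp add: sum_distrib_left)
    finally show ?thesis .
  qed
  have Bineq: "Re ((B *\<^sub>v z) \<bullet>c z) \<le> K * Re ((Q *\<^sub>v z) \<bullet>c z)" if z: "z \<in> carrier_vec n" for z
  proof -
    have "Re ((B *\<^sub>v z) \<bullet>c z) = (\<Sum>i<n. b i * (cmod ((mat_adjoint W *\<^sub>v z) $ i))\<^sup>2)"
      unfolding Beq by (rule re_qform_udu[OF uW z])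
    also have "\<dots> \<le> (\<Sum>i<n. K * (b i powr t * (cmod ((mat_adjoint W *\<^sub>v z) $ i))\<^sup>2))"
    proof (rule sum_mono)
      fix i assume "i \<in> {..<n}"
      then have i: "i < n" by simp
      have "b i \<le> K * b i powr t" unfolding K_def by (rule powr_key[OF bpos[OF i] bL[OF i] t0 t1])
      then show "b i * (cmod ((mat_adjoint W *\<^sub>v z) $ i))\<^sup>2 \<le> K * (b i powr t * (cmod ((mat_adjoint W *\<^sub>v z) $ i))\<^sup>2)"
        by (metis mult.assoc mult_right_mono zero_le_power2)
    qed
    also have "\<dots> = K * Re ((Q *\<^sub>v z) \<bullet>c z)"
      unfolding Qeq re_qform_udu[OF uW z] by (simp add: sum_distrib_left)
    finally show ?thesis .
  qed
  define x0 where "x0 = V *\<^sub>v unit_vec n ke"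
  have x0: "x0 \<in> carrier_vec n" and xx0: "x0 \<bullet>c x0 = 1" unfolding x0_def using qform_ev[OF uV ke] by auto
  have "em = Re (((A + B) *\<^sub>v x0) \<bullet>c x0)" unfolding ABeq x0_def qform_ev(1)[OF uV ke] em_def by simp
  also have "\<dots> = Re ((A *\<^sub>v x0) \<bullet>c x0) + Re ((B *\<^sub>v x0) \<bullet>c x0)"
    using Ac Bc x0 by (simp add: add_mult_distrib_mat_vec[OF Ac Bc x0] cinner_add_left[of _ n])
  also have "\<dots> \<le> K * (Re ((P *\<^sub>v x0) \<bullet>c x0) + Re ((Q *\<^sub>v x0) \<bullet>c x0))"
    using Aineq[OF x0] Bineq[OF x0] by (simp add: distrib_left)
  also have "\<dots> \<le> K * L" by (rule mult_left_mono[OF key[OF x0 xx0] K0])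
  also have "K * L = L powr (1 / t)"
  proof -
    have "K * L = L powr ((1 - t) / t) * L powr 1" unfolding K_def using L0 by simp
    also have "\<dots> = L powr ((1 - t) / t + 1)" by (simp add: powr_add)
    also have "(1 - t) / t + 1 = 1 / t" using t0 by (simp add: field_simps)
    finally show ?thesis .
  qed
  finally have emL: "em \<le> L powr (1 / t)" .
  have emt: "em powr t \<le> L"
  proof -
    have "em powr t \<le> (L powr (1 / t)) powr t" by (rule powr_mono2) (use t0 em0 emL in auto)
    also have "\<dots> = L" using t0 L0 by (simp add: powr_powr)
    finally show ?thesis .
  qed
  have "matfun n (\<lambda>x. x powr t) (A + B) = V * real_diag_mat n (\<lambda>i. e i powr t) * mat_adjoint V"
    by (rule matfun_eq[OF uV ABeq])
  then have "wq n q (matfun n (\<lambda>x. x powr t) (A + B)) \<le> em powr t"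
  proof -
    assume eq: "matfun n (\<lambda>x. x powr t) (A + B) = V * real_diag_mat n (\<lambda>i. e i powr t) * mat_adjoint V"
    show ?thesis unfolding eq
    proof (rule wq_upper[OF n q1 uV])
      fix i assume i: "i < n"
      have "\<bar>e i powr t\<bar> = e i powr t" by simp
      also have "\<dots> \<le> em powr t" by (rule powr_mono2) (use t0 epos[OF i] kmax i em_def in auto)
      finally show "\<bar>e i powr t\<bar> \<le> em powr t" .
    qed simp
  qed
  then have "s * wq n q (matfun n (\<lambda>x. x powr t) (A + B)) \<le> s * L"
    using emt s0 by (meson mult_left_mono less_imp_le order_trans)
  also have "s * L = wq n q (P + Q)" unfolding L_def using s0 by simp
  finally show ?thesis unfolding s_def P_def Q_def .
qed

theorem mainTheorem8:
  fixes n :: nat and A B :: "complex mat" and q :: complex and f :: "real \<Rightarrow> real"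
  assumes "n \<ge> 2"
    and "posdef_mat n A" and "posdef_mat n B"
    and "0 < cmod q" and "cmod q \<le> 1"
    and "f \<in> class_F"
  shows "((cmod q)\<^sup>2 * f (wq n q A) \<le> cmod q * wq n q (matfun n f A)
         \<and> cmod q * wq n q (matfun n f A) \<le> f (wq n q A))
    \<and> (\<forall>\<gamma>::real. 0 < \<gamma> \<and> \<gamma> < 1 \<longrightarrow>
         cmod q * wq n q ((complex_of_real (1 - \<gamma>)) \<cdot>\<^sub>m matfun n f A + (complex_of_real \<gamma>) \<cdot>\<^sub>m matfun n f B)
         \<le> f ((1 - \<gamma>) * wq n q A + \<gamma> * wq n q B))
    \<and> (\<forall>t::real. 0 < t \<and> t < 1 \<longrightarrow>
         cmod q * wq n q (matfun n (\<lambda>x. x powr t) (A + B))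
         \<le> wq n q (matfun n (\<lambda>x. x powr t) A + matfun n (\<lambda>x. x powr t) B))"
proof -
  note n = assms(1) and pA = assms(2) and pB = assms(3) and q0 = assms(4) and q1 = assms(5) and f = assms(6)
  define s where "s = cmod q"
  have s0: "0 < s" and s1: "s \<le> 1" using q0 q1 unfolding s_def by auto
  have hA: "hermitian_mat n A" and hB: "hermitian_mat n B" using pA pB unfolding posdef_mat_def by auto
  obtain U a where uU: "unitary_mat n U" and Aeq: "A = U * real_diag_mat n a * mat_adjoint U"
    using spectral[OF hA] by blast
  obtain W b where uW: "unitary_mat n W" and Beq: "B = W * real_diag_mat n b * mat_adjoint W"
    using spectral[OF hB] by blast
  have apos: "0 < a i" if "i < n" for i using posdef_ev[OF pA uU Aeq that] .
  have bpos: "0 < b i" if "i < n" for i using posdef_ev[OF pB uW Beq that] .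
  obtain ka where ka: "ka < n" and kamax: "\<forall>i<n. a i \<le> a ka" using ex_argmax[of n a] n by auto
  obtain kb where kb: "kb < n" and kbmax: "\<forall>i<n. b i \<le> b kb" using ex_argmax[of n b] n by auto
  define am where "am = a ka"
  define bm where "bm = b kb"
  have am0: "0 < am" unfolding am_def using apos ka by simp
  have bm0: "0 < bm" unfolding bm_def using bpos kb by simp
  have fA: "matfun n f A = U * real_diag_mat n (\<lambda>i. f (a i)) * mat_adjoint U" by (rule matfun_eq[OF uU Aeq])
  have fB: "matfun n f B = W * real_diag_mat n (\<lambda>i. f (b i)) * mat_adjoint W" by (rule matfun_eq[OF uW Beq])
  have wA_up: "wq n q A \<le> am" unfolding Aeq
  proof (rule wq_upper[OF n q1 uU])
    fix i assume i: "i < n"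
    have "\<bar>a i\<bar> = a i" using apos[OF i] by simp
    then show "\<bar>a i\<bar> \<le> am" using kamax i unfolding am_def by simp
  qed (use am0 in simp)
  have wB_up: "wq n q B \<le> bm" unfolding Beq
  proof (rule wq_upper[OF n q1 uW])
    fix i assume i: "i < n"
    have "\<bar>b i\<bar> = b i" using bpos[OF i] by simp
    then show "\<bar>b i\<bar> \<le> bm" using kbmax i unfolding bm_def by simp
  qed (use bm0 in simp)
  have wA_lo: "s * am \<le> wq n q A"
    using wq_ev_lower[OF n q1 uU ka, of a] am0 unfolding Aeq s_def am_def by simp
  have wB_lo: "s * bm \<le> wq n q B"
    using wq_ev_lower[OF n q1 uW kb, of b] bm0 unfolding Beq s_def bm_def by simp
  have fam0: "0 < f am" using f_pos[OF f am0] .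
  have fbm0: "0 < f bm" using f_pos[OF f bm0] .
  have wfA_up: "wq n q (matfun n f A) \<le> f am" unfolding fA
  proof (rule wq_upper[OF n q1 uU])
    fix i assume i: "i < n"
    have "\<bar>f (a i)\<bar> = f (a i)" using f_pos[OF f apos[OF i]] by simp
    also have "\<dots> \<le> f am" unfolding am_def by (rule f_mono[OF f apos[OF i]]) (use kamax i in auto)
    finally show "\<bar>f (a i)\<bar> \<le> f am" .
  qed (use fam0 in simp)
  have wfB_up: "wq n q (matfun n f B) \<le> f bm" unfolding fB
  proof (rule wq_upper[OF n q1 uW])
    fix i assume i: "i < n"
    have "\<bar>f (b i)\<bar> = f (b i)" using f_pos[OF f bpos[OF i]] by simp
    also have "\<dots> \<le> f bm" unfolding bm_def by (rule f_mono[OF f bpos[OF i]]) (use kbmax i in auto)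
    finally show "\<bar>f (b i)\<bar> \<le> f bm" .
  qed (use fbm0 in simp)
  have wfA_lo: "s * f am \<le> wq n q (matfun n f A)"
    using wq_ev_lower[OF n q1 uU ka, of "\<lambda>i. f (a i)"] fam0 unfolding fA s_def am_def by simp
  have wA_pos: "0 < wq n q A" using wA_lo s0 am0 by (smt (verit) mult_pos_pos)
  have wB_pos: "0 < wq n q B" using wB_lo s0 bm0 by (smt (verit) mult_pos_pos)
  have sam0: "0 < s * am" using s0 am0 by simp
  have sbm0: "0 < s * bm" using s0 bm0 by simp
  have a1: "s\<^sup>2 * f (wq n q A) \<le> s * wq n q (matfun n f A)"
  proof -
    have "f (wq n q A) \<le> f am" by (rule f_mono[OF f wA_pos wA_up])
    then have "s * f (wq n q A) \<le> s * f am" using s0 by simp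
    also have "\<dots> \<le> wq n q (matfun n f A)" by (rule wfA_lo)
    finally have "s * f (wq n q A) \<le> wq n q (matfun n f A)" .
    then have "s * (s * f (wq n q A)) \<le> s * wq n q (matfun n f A)" using s0 by simp
    then show ?thesis by (simp add: power2_eq_square mult.assoc)
  qed
  have a2: "s * wq n q (matfun n f A) \<le> f (wq n q A)"
  proof -
    have "s * wq n q (matfun n f A) \<le> s * f am" using wfA_up s0 by simp
    also have "\<dots> \<le> f (s * am)" by (rule f_scale[OF f am0 s0 s1])
    also have "\<dots> \<le> f (wq n q A)" by (rule f_mono[OF f sam0 wA_lo])
    finally show ?thesis .
  qed
  have pb: "s * wq n q ((complex_of_real (1 - \<gamma>)) \<cdot>\<^sub>m matfun n f A + (complex_of_real \<gamma>) \<cdot>\<^sub>m matfun n f B)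
         \<le> f ((1 - \<gamma>) * wq n q A + \<gamma> * wq n q B)" if g0: "0 < \<gamma>" and g1: "\<gamma> < 1" for \<gamma>
  proof -
    have hfA: "hermitian_mat n (matfun n f A)" unfolding fA by (rule herm_udu[OF uU])
    have hfB: "hermitian_mat n (matfun n f B)" unfolding fB by (rule herm_udu[OF uW])
    define mx where "mx = (1 - \<gamma>) * am + \<gamma> * bm"
    have mx0: "0 < mx" unfolding mx_def using g0 g1 am0 bm0 by (simp add: add_pos_pos)
    have "wq n q ((complex_of_real (1 - \<gamma>)) \<cdot>\<^sub>m matfun n f A + (complex_of_real \<gamma>) \<cdot>\<^sub>m matfun n f B)
        \<le> (1 - \<gamma>) * wq n q (matfun n f A) + \<gamma> * wq n q (matfun n f B)"
      by (rule wq_subadd[OF n q1 hfA hfB]) (use g0 g1 in auto)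
    also have "\<dots> \<le> (1 - \<gamma>) * f am + \<gamma> * f bm"
      by (intro add_mono mult_left_mono wfA_up wfB_up) (use g0 g1 in auto)
    also have "\<dots> \<le> f mx"
      using f_concave[OF f am0 bm0, of "1 - \<gamma>"] g0 g1 unfolding mx_def by simp
    finally have X: "wq n q ((complex_of_real (1 - \<gamma>)) \<cdot>\<^sub>m matfun n f A + (complex_of_real \<gamma>) \<cdot>\<^sub>m matfun n f B) \<le> f mx" .
    have "s * wq n q ((complex_of_real (1 - \<gamma>)) \<cdot>\<^sub>m matfun n f A + (complex_of_real \<gamma>) \<cdot>\<^sub>m matfun n f B) \<le> s * f mx"
      using X s0 by simp
    also have "\<dots> \<le> f (s * mx)" by (rule f_scale[OF f mx0 s0 s1])
    also have "\<dots> \<le> f ((1 - \<gamma>) * wq n q A + \<gamma> * wq n q B)"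
    proof (rule f_mono[OF f])
      show "0 < s * mx" using s0 mx0 by simp
      have "s * mx = (1 - \<gamma>) * (s * am) + \<gamma> * (s * bm)" unfolding mx_def by (simp add: algebra_simps)
      also have "\<dots> \<le> (1 - \<gamma>) * wq n q A + \<gamma> * wq n q B"
        by (intro add_mono mult_left_mono wA_lo wB_lo) (use g0 g1 in auto)
      finally show "s * mx \<le> (1 - \<gamma>) * wq n q A + \<gamma> * wq n q B" .
    qed
    finally show ?thesis .
  qed
  have pc: "cmod q * wq n q (matfun n (\<lambda>x. x powr t) (A + B))
         \<le> wq n q (matfun n (\<lambda>x. x powr t) A + matfun n (\<lambda>x. x powr t) B)" if "0 < t" "t < 1" for t
    by (rule part_c[OF n pA pB q0 q1 that])
  show ?thesis using a1 a2 pb pc unfolding s_def by blast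
qed

end
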